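(* Let $R$ be a $*$-ring. Equip the power series ring $R[[x]]$ with the involution $\big(\sum_{i\ge 0}a_ix^i\big)^*=\sum_{i\ge0}a_i^*x^i$, and $R[[x]]/(x^n)$ with the induced involution. Then the following are equivalent: (1) $R$ is strongly $J$-$*$-clean. (2) $R[[x]]$ is strongly $J$-$*$-clean. (3) $R[[x]]/(x^n)$ is strongly $J$-$*$-clean for all $n\ge 2$. (4) $R[[x]]/(x^2)$ is strongly $J$-$*$-clean.
   Context: All rings are associative with identity. A $*$-ring is a ring $R$ with an involution $*$, i.e. a map $a\mapsto a^*$ with $(a+b)^*=a^*+b^*$, $(ab)^*=b^*a^*$, $(a^* )^*=a$. $J(R)$ denotes the Jacobson radical of $R$. A projection is an element $e$ with $e^2=e=e^*$. A $*$-ring $R$ is strongly $J$-$*$-clean if every $a\in R$ can be written $a=e+u$ with $e$ a projection, $u\in J(R)$ and $ae=ea$. *)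

theory Defs
  imports "HOL-Algebra.Algebra"
begin

definition star_ring :: "('a, 'm) ring_scheme \<Rightarrow> ('a \<Rightarrow> 'a) \<Rightarrow> bool" where
  "star_ring R s \<longleftrightarrow> ring R \<and> (\<forall>a\<in>carrier R. s a \<in> carrier R) \<and>
     (\<forall>a\<in>carrier R. \<forall>b\<in>carrier R. s (a \<oplus>\<^bsub>R\<^esub> b) = s a \<oplus>\<^bsub>R\<^esub> s b) \<and>
     (\<forall>a\<in>carrier R. \<forall>b\<in>carrier R. s (a \<otimes>\<^bsub>R\<^esub> b) = s b \<otimes>\<^bsub>R\<^esub> s a) \<and>
     (\<forall>a\<in>carrier R. s (s a) = a)"

definition left_ideal :: "'a set \<Rightarrow> ('a, 'm) ring_scheme \<Rightarrow> bool" where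
  "left_ideal I R \<longleftrightarrow> additive_subgroup I R \<and>
     (\<forall>r\<in>carrier R. \<forall>a\<in>I. r \<otimes>\<^bsub>R\<^esub> a \<in> I)"

definition maximal_left_ideal :: "'a set \<Rightarrow> ('a, 'm) ring_scheme \<Rightarrow> bool" where
  "maximal_left_ideal I R \<longleftrightarrow> left_ideal I R \<and> I \<noteq> carrier R \<and>
     (\<forall>K. left_ideal K R \<and> I \<subseteq> K \<and> K \<noteq> carrier R \<longrightarrow> K = I)"

definition jacobson :: "('a, 'm) ring_scheme \<Rightarrow> 'a set" where
  "jacobson R = carrier R \<inter> \<Inter> {I. maximal_left_ideal I R}"

definition projection :: "('a, 'm) ring_scheme \<Rightarrow> ('a \<Rightarrow> 'a) \<Rightarrow> 'a \<Rightarrow> bool" where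
  "projection R s e \<longleftrightarrow> e \<in> carrier R \<and> e \<otimes>\<^bsub>R\<^esub> e = e \<and> s e = e"

definition strongly_J_star_clean :: "('a, 'm) ring_scheme \<Rightarrow> ('a \<Rightarrow> 'a) \<Rightarrow> bool" where
  "strongly_J_star_clean R s \<longleftrightarrow>
     (\<forall>a\<in>carrier R. \<exists>e u. projection R s e \<and> u \<in> jacobson R \<and>
        a = e \<oplus>\<^bsub>R\<^esub> u \<and> a \<otimes>\<^bsub>R\<^esub> e = e \<otimes>\<^bsub>R\<^esub> a)"

definition PS_carrier :: "('a, 'm) ring_scheme \<Rightarrow> (nat \<Rightarrow> 'a) set" where
  "PS_carrier R = {f. \<forall>i. f i \<in> carrier R}"

definition PS :: "('a, 'm) ring_scheme \<Rightarrow> (nat \<Rightarrow> 'a) ring" where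
  "PS R = \<lparr>carrier = PS_carrier R,
           monoid.mult = (\<lambda>f g n. \<Oplus>\<^bsub>R\<^esub> i\<in>{..n}. f i \<otimes>\<^bsub>R\<^esub> g (n - i)),
           monoid.one = (\<lambda>n. if n = 0 then \<one>\<^bsub>R\<^esub> else \<zero>\<^bsub>R\<^esub>),
           ring.zero = (\<lambda>n. \<zero>\<^bsub>R\<^esub>),
           ring.add = (\<lambda>f g n. f n \<oplus>\<^bsub>R\<^esub> g n)\<rparr>"

definition PS_X :: "('a, 'm) ring_scheme \<Rightarrow> nat \<Rightarrow> 'a" where
  "PS_X R = (\<lambda>n. if n = 1 then \<one>\<^bsub>R\<^esub> else \<zero>\<^bsub>R\<^esub>)"

definition PS_star :: "('a \<Rightarrow> 'a) \<Rightarrow> (nat \<Rightarrow> 'a) \<Rightarrow> (nat \<Rightarrow> 'a)" where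
  "PS_star s f = (\<lambda>n. s (f n))"

definition PS_ideal :: "('a, 'm) ring_scheme \<Rightarrow> nat \<Rightarrow> (nat \<Rightarrow> 'a) set" where
  "PS_ideal R n = genideal (PS R) {PS_X R [^]\<^bsub>(PS R)\<^esub> n}"

definition PS_trunc :: "('a, 'm) ring_scheme \<Rightarrow> nat \<Rightarrow> (nat \<Rightarrow> 'a) set ring" where
  "PS_trunc R n = PS R Quot PS_ideal R n"

text \<open>Induced involution on cosets: the class of f is sent to the class of f*
  (written as the image of the coset under the involution of R[[x]]).\<close>
definition PS_trunc_star :: "('a \<Rightarrow> 'a) \<Rightarrow> (nat \<Rightarrow> 'a) set \<Rightarrow> (nat \<Rightarrow> 'a) set" where
  "PS_trunc_star s C = image (PS_star s) C"

end

theory Submission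
  imports Defs
begin



context ring begin

lemma PS_simps:
  "carrier (PS R) = PS_carrier R"
  "f \<otimes>\<^bsub>PS R\<^esub> g = (\<lambda>n. \<Oplus>i\<in>{..n}. f i \<otimes> g (n - i))"
  "\<one>\<^bsub>PS R\<^esub> = (\<lambda>n. if n = 0 then \<one> else \<zero>)"
  "\<zero>\<^bsub>PS R\<^esub> = (\<lambda>n. \<zero>)"
  "f \<oplus>\<^bsub>PS R\<^esub> g = (\<lambda>n. f n \<oplus> g n)"
  by (simp_all add: PS_def)

lemma finsum_single:
  assumes "i \<in> A" "finite A" "c \<in> carrier R"
  shows "(\<Oplus>j\<in>A. if j = i then c else \<zero>) = c"
  using add.finprod_singleton_swap[of i A "\<lambda>_. c"] assms by (simp add: Pi_def)

lemma PS_carrier_iff: "f \<in> PS_carrier R \<longleftrightarrow> (\<forall>i. f i \<in> carrier R)"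
  by (simp add: PS_carrier_def)

lemma PS_m_assoc:
  assumes "a \<in> PS_carrier R" "b \<in> PS_carrier R" "c \<in> PS_carrier R"
  shows "a \<otimes>\<^bsub>PS R\<^esub> b \<otimes>\<^bsub>PS R\<^esub> c = a \<otimes>\<^bsub>PS R\<^esub> (b \<otimes>\<^bsub>PS R\<^esub> c)"
proof -
  have R: "a \<in> UNIV \<rightarrow> carrier R" "b \<in> UNIV \<rightarrow> carrier R" "c \<in> UNIV \<rightarrow> carrier R"
    using assms by (auto simp: PS_carrier_iff)
  {
    fix n k
    have "k <= n ==>
      (\<Oplus>j \<in> {..k}. (\<Oplus>i \<in> {..j}. a i \<otimes> b (j-i)) \<otimes> c (n-j)) =
      (\<Oplus>j \<in> {..k}. a j \<otimes> (\<Oplus>i \<in> {..k-j}. b i \<otimes> c (n-j-i)))"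
      (is "_ \<Longrightarrow> ?eq k")
    proof (induct k)
      case 0 then show ?case using R by (simp add: Pi_def m_assoc)
    next
      case (Suc k)
      then have "k <= n" by arith
      then have "?eq k" by (rule Suc)
      with R show ?case
        by (simp cong: finsum_cong
             add: Suc_diff_le Pi_def l_distr r_distr m_assoc)
           (simp cong: finsum_cong add: Pi_def a_ac finsum_ldistr m_assoc)
    qed
  }
  then show ?thesis using R by (auto simp: PS_simps Pi_def intro!: ext)
qed

lemma PS_closed: "f \<in> PS_carrier R \<Longrightarrow> g \<in> PS_carrier R \<Longrightarrow> f \<otimes>\<^bsub>PS R\<^esub> g \<in> PS_carrier R"
  by (auto simp: PS_simps PS_carrier_iff intro!: finsum_closed)

lemma PS_lone_aux:
  assumes xc: "\<And>i::nat. x i \<in> carrier R"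
  shows "(\<Oplus>i\<in>{..n}. (if i = 0 then \<one> else \<zero>) \<otimes> x (n - i)) = x n"
proof -
  have "(\<Oplus>i\<in>{..n}. (if i = 0 then \<one> else \<zero>) \<otimes> x (n - i)) = (\<Oplus>i\<in>{..n::nat}. (if i = 0 then x n else \<zero>))"
    apply (rule finsum_cong')
    apply simp
    apply (simp add: xc)
    apply (simp add: xc)
    done
  also have "\<dots> = x n" by (rule finsum_single) (auto simp: xc)
  finally show ?thesis .
qed

lemma PS_rone_aux:
  assumes xc: "\<And>i::nat. x i \<in> carrier R"
  shows "(\<Oplus>i\<in>{..n}. x i \<otimes> (if n - i = 0 then \<one> else \<zero>)) = x n"
proof -
  have "(\<Oplus>i\<in>{..n}. x i \<otimes> (if n - i = 0 then \<one> else \<zero>)) = (\<Oplus>i\<in>{..n::nat}. (if i = n then x n else \<zero>))"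
    apply (rule finsum_cong')
    apply simp
    apply (simp add: xc)
    apply (auto simp add: xc)
    done
  also have "\<dots> = x n" by (rule finsum_single) (auto simp: xc)
  finally show ?thesis .
qed

lemma A1: "x \<in> carrier (PS R) \<Longrightarrow> y \<in> carrier (PS R) \<Longrightarrow> z \<in> carrier (PS R) \<Longrightarrow> 
      x \<oplus>\<^bsub>PS R\<^esub> y \<in> carrier (PS R) \<and>
      x \<oplus>\<^bsub>PS R\<^esub> y \<oplus>\<^bsub>PS R\<^esub> z = x \<oplus>\<^bsub>PS R\<^esub> (y \<oplus>\<^bsub>PS R\<^esub> z) \<and>
      x \<oplus>\<^bsub>PS R\<^esub> y = y \<oplus>\<^bsub>PS R\<^esub> x \<and>
      \<zero>\<^bsub>PS R\<^esub> \<oplus>\<^bsub>PS R\<^esub> x = x"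
  by (auto simp: PS_simps PS_carrier_iff a_assoc intro: a_comm)
lemma A2: "x \<in> carrier (PS R) \<Longrightarrow> y \<in> carrier (PS R) \<Longrightarrow> z \<in> carrier (PS R) \<Longrightarrow> 
      (x \<oplus>\<^bsub>PS R\<^esub> y) \<otimes>\<^bsub>PS R\<^esub> z = x \<otimes>\<^bsub>PS R\<^esub> z \<oplus>\<^bsub>PS R\<^esub> y \<otimes>\<^bsub>PS R\<^esub> z"
  by (simp add: PS_simps PS_carrier_iff l_distr finsum_addf Pi_def)
lemma A3: "x \<in> carrier (PS R) \<Longrightarrow> y \<in> carrier (PS R) \<Longrightarrow> z \<in> carrier (PS R) \<Longrightarrow> 
      z \<otimes>\<^bsub>PS R\<^esub> (x \<oplus>\<^bsub>PS R\<^esub> y) = z \<otimes>\<^bsub>PS R\<^esub> x \<oplus>\<^bsub>PS R\<^esub> z \<otimes>\<^bsub>PS R\<^esub> y"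
  by (simp add: PS_simps PS_carrier_iff r_distr finsum_addf Pi_def)
lemma PS_ring: "ring (PS R)"
proof (rule ringI)
  show "abelian_group (PS R)"
  proof (rule abelian_groupI)
    fix x y z assume "x \<in> carrier (PS R)" "y \<in> carrier (PS R)" "z \<in> carrier (PS R)"
    then show "x \<oplus>\<^bsub>PS R\<^esub> y \<in> carrier (PS R)"
      "x \<oplus>\<^bsub>PS R\<^esub> y \<oplus>\<^bsub>PS R\<^esub> z = x \<oplus>\<^bsub>PS R\<^esub> (y \<oplus>\<^bsub>PS R\<^esub> z)"
      "x \<oplus>\<^bsub>PS R\<^esub> y = y \<oplus>\<^bsub>PS R\<^esub> x"
      "\<zero>\<^bsub>PS R\<^esub> \<oplus>\<^bsub>PS R\<^esub> x = x"
      using A1 by blast+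
  next
    show "\<zero>\<^bsub>PS R\<^esub> \<in> carrier (PS R)" by (simp add: PS_simps PS_carrier_iff)
  next
    fix x assume x: "x \<in> carrier (PS R)"
    show "\<exists>y\<in>carrier (PS R). y \<oplus>\<^bsub>PS R\<^esub> x = \<zero>\<^bsub>PS R\<^esub>"
      by (rule bexI[of _ "\<lambda>n. \<ominus> x n"]) (use x in \<open>auto simp: PS_simps PS_carrier_iff l_neg\<close>)
  qed
next
  show "monoid (PS R)"
  proof (rule monoidI)
    fix x y z assume x: "x \<in> carrier (PS R)" and y: "y \<in> carrier (PS R)" and z: "z \<in> carrier (PS R)"
    then show "x \<otimes>\<^bsub>PS R\<^esub> y \<in> carrier (PS R)" using PS_closed by (simp only: PS_simps(1))
    show "x \<otimes>\<^bsub>PS R\<^esub> y \<otimes>\<^bsub>PS R\<^esub> z = x \<otimes>\<^bsub>PS R\<^esub> (y \<otimes>\<^bsub>PS R\<^esub> z)"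
      using x y z by (simp only: PS_simps(1) PS_m_assoc)
  next
    show "\<one>\<^bsub>PS R\<^esub> \<in> carrier (PS R)" by (simp add: PS_simps PS_carrier_iff)
  next
    fix x assume x: "x \<in> carrier (PS R)"
    have xc: "\<And>i. x i \<in> carrier R" using x by (simp add: PS_simps PS_carrier_iff)
    show "\<one>\<^bsub>PS R\<^esub> \<otimes>\<^bsub>PS R\<^esub> x = x" unfolding PS_simps(2,3) using PS_lone_aux[of x, OF xc] by (intro ext) simp
    show "x \<otimes>\<^bsub>PS R\<^esub> \<one>\<^bsub>PS R\<^esub> = x" unfolding PS_simps(2,3) using PS_rone_aux[of x, OF xc] by (intro ext) simp
  qed
next
  fix x y z assume "x \<in> carrier (PS R)" "y \<in> carrier (PS R)" "z \<in> carrier (PS R)"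
  then show "(x \<oplus>\<^bsub>PS R\<^esub> y) \<otimes>\<^bsub>PS R\<^esub> z = x \<otimes>\<^bsub>PS R\<^esub> z \<oplus>\<^bsub>PS R\<^esub> y \<otimes>\<^bsub>PS R\<^esub> z"
    "z \<otimes>\<^bsub>PS R\<^esub> (x \<oplus>\<^bsub>PS R\<^esub> y) = z \<otimes>\<^bsub>PS R\<^esub> x \<oplus>\<^bsub>PS R\<^esub> z \<otimes>\<^bsub>PS R\<^esub> y"
    using A2 A3 by blast+
qed

end



context ring begin

lemma additive_subgroup_intro:
  assumes "I \<subseteq> carrier R" "\<zero> \<in> I" "\<And>a. a \<in> I \<Longrightarrow> \<ominus> a \<in> I"
    "\<And>a b. a \<in> I \<Longrightarrow> b \<in> I \<Longrightarrow> a \<oplus> b \<in> I"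
  shows "additive_subgroup I R"
  unfolding additive_subgroup_def
  apply (rule add.subgroupI)
  using assms by (auto simp: a_inv_def)

lemma left_idealI:
  assumes "I \<subseteq> carrier R" "\<zero> \<in> I" "\<And>a. a \<in> I \<Longrightarrow> \<ominus> a \<in> I"
    "\<And>a b. a \<in> I \<Longrightarrow> b \<in> I \<Longrightarrow> a \<oplus> b \<in> I"
    "\<And>r a. r \<in> carrier R \<Longrightarrow> a \<in> I \<Longrightarrow> r \<otimes> a \<in> I"
  shows "left_ideal I R"
  using assms additive_subgroup_intro unfolding left_ideal_def by blast

lemma left_idealD:
  assumes "left_ideal I R"
  shows "I \<subseteq> carrier R" "\<zero> \<in> I" "\<And>a. a \<in> I \<Longrightarrow> \<ominus> a \<in> I"
    "\<And>a b. a \<in> I \<Longrightarrow> b \<in> I \<Longrightarrow> a \<oplus> b \<in> I"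
    "\<And>r a. r \<in> carrier R \<Longrightarrow> a \<in> I \<Longrightarrow> r \<otimes> a \<in> I"
  using assms unfolding left_ideal_def
  by (auto simp: additive_subgroup.a_subset additive_subgroup.zero_closed
      additive_subgroup.a_inv_closed additive_subgroup.a_closed)

lemma left_ideal_minus:
  assumes "left_ideal I R" "a \<in> I" "b \<in> I" shows "a \<ominus> b \<in> I"
  using left_idealD[OF assms(1)] assms(2,3) by (simp add: a_minus_def)

lemma left_ideal_one:
  assumes "left_ideal I R" "\<one> \<in> I" shows "I = carrier R"
proof
  show "I \<subseteq> carrier R" using left_idealD[OF assms(1)] by blast
  show "carrier R \<subseteq> I"
  proof
    fix r assume r: "r \<in> carrier R"
    then have "r \<otimes> \<one> \<in> I" using left_idealD(5)[OF assms(1) r assms(2)] by blast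
    then show "r \<in> I" using r by simp
  qed
qed

lemma jacobson_carrier: "jacobson R \<subseteq> carrier R"
  unfolding jacobson_def by blast

lemma jacobsonI:
  assumes "j \<in> carrier R" "\<And>M. maximal_left_ideal M R \<Longrightarrow> j \<in> M"
  shows "j \<in> jacobson R"
  using assms unfolding jacobson_def by blast

lemma jacobsonD:
  assumes "j \<in> jacobson R" "maximal_left_ideal M R"
  shows "j \<in> M"
  using assms unfolding jacobson_def by blast

lemma jacobson_lmult:
  assumes "j \<in> jacobson R" "r \<in> carrier R"
  shows "r \<otimes> j \<in> jacobson R"
proof (rule jacobsonI)
  show "r \<otimes> j \<in> carrier R" using assms jacobson_carrier by blast
  fix M assume M: "maximal_left_ideal M R"
  then have "left_ideal M R" unfolding maximal_left_ideal_def by blast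
  then show "r \<otimes> j \<in> M" using left_idealD(5) assms(2) jacobsonD[OF assms(1) M] by blast
qed

lemma exists_maximal_left_ideal:
  assumes I: "left_ideal I R" and one: "\<one> \<notin> I"
  shows "\<exists>M. maximal_left_ideal M R \<and> I \<subseteq> M"
proof -
  define A where "A = {K. left_ideal K R \<and> I \<subseteq> K \<and> \<one> \<notin> K}"
  have "\<exists>M\<in>A. \<forall>Y\<in>A. M \<subseteq> Y \<longrightarrow> Y = M"
  proof (rule subset_Zorn_nonempty)
    show "A \<noteq> {}" using I one by (auto simp: A_def)
  next
    fix C assume Cne: "C \<noteq> {}" and ch: "subset.chain A C"
    then have CA: "C \<subseteq> A" and lin: "\<And>U Y. U \<in> C \<Longrightarrow> Y \<in> C \<Longrightarrow> U \<subseteq> Y \<or> Y \<subseteq> U"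
      by (auto simp: subset_chain_def)
    have li: "\<And>U. U \<in> C \<Longrightarrow> left_ideal U R" using CA by (auto simp: A_def)
    have "left_ideal (\<Union>C) R"
    proof (rule left_idealI)
      show "\<Union>C \<subseteq> carrier R" using li left_idealD(1) by blast
      show "\<zero> \<in> \<Union>C" using Cne li left_idealD(2) by blast
      show "\<ominus> a \<in> \<Union>C" if "a \<in> \<Union>C" for a using that li left_idealD(3) by blast
      show "r \<otimes> a \<in> \<Union>C" if "r \<in> carrier R" "a \<in> \<Union>C" for r a using that li left_idealD(5) by blast
      show "a \<oplus> b \<in> \<Union>C" if h: "a \<in> \<Union>C" "b \<in> \<Union>C" for a b
      proof -
        obtain U Y where U: "U \<in> C" "a \<in> U" and Y: "Y \<in> C" "b \<in> Y" using h by blast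
        show ?thesis
        proof (cases "U \<subseteq> Y")
          case True then show ?thesis using U Y li left_idealD(4) by blast
        next
          case False then have "Y \<subseteq> U" using lin U Y by blast
          then show ?thesis using U Y li left_idealD(4) by blast
        qed
      qed
    qed
    moreover have "I \<subseteq> \<Union>C" using Cne CA by (auto simp: A_def)
    moreover have "\<one> \<notin> \<Union>C" using CA by (auto simp: A_def)
    ultimately show "\<Union>C \<in> A" by (simp add: A_def)
  qed
  then obtain M where M: "M \<in> A" and mx: "\<And>Y. Y \<in> A \<Longrightarrow> M \<subseteq> Y \<Longrightarrow> Y = M" by blast
  have "maximal_left_ideal M R"
    unfolding maximal_left_ideal_def
  proof (intro conjI allI impI)
    show "left_ideal M R" using M by (simp add: A_def)
    show "M \<noteq> carrier R" using M by (auto simp: A_def)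
    fix K assume K: "left_ideal K R \<and> M \<subseteq> K \<and> K \<noteq> carrier R"
    then have "\<one> \<notin> K" using left_ideal_one by blast
    then show "K = M" using K M mx by (auto simp: A_def)
  qed
  then show ?thesis using M by (auto simp: A_def)
qed

lemma jacobson_left_unit:
  assumes j: "j \<in> jacobson R"
  shows "\<exists>v\<in>carrier R. v \<otimes> (\<one> \<ominus> j) = \<one>"
proof (rule ccontr)
  assume nex: "\<not> ?thesis"
  have jc: "j \<in> carrier R" using j jacobson_carrier by blast
  let ?I = "(\<lambda>r. r \<otimes> (\<one> \<ominus> j)) ` carrier R"
  have "left_ideal ?I R"
  proof (rule left_idealI)
    show "?I \<subseteq> carrier R" using jc by auto
    have "\<zero> = \<zero> \<otimes> (\<one> \<ominus> j)" using jc by simp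
    then show "\<zero> \<in> ?I" by blast
    show "\<ominus> a \<in> ?I" if h: "a \<in> ?I" for a
    proof -
      obtain r where r: "r \<in> carrier R" "a = r \<otimes> (\<one> \<ominus> j)" by (rule imageE[OF h]) blast
      then have "\<ominus> a = (\<ominus> r) \<otimes> (\<one> \<ominus> j)" using jc by (simp add: l_minus)
      then show ?thesis using r by blast
    qed
    show "a \<oplus> b \<in> ?I" if h: "a \<in> ?I" "b \<in> ?I" for a b
    proof -
      obtain r where r: "r \<in> carrier R" "a = r \<otimes> (\<one> \<ominus> j)" by (rule imageE[OF h(1)]) blast
      obtain t where t: "t \<in> carrier R" "b = t \<otimes> (\<one> \<ominus> j)" by (rule imageE[OF h(2)]) blast
      have "a \<oplus> b = (r \<oplus> t) \<otimes> (\<one> \<ominus> j)" using jc r t by (simp add: l_distr)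
      then show ?thesis using r t by blast
    qed
    show "r \<otimes> a \<in> ?I" if h: "r \<in> carrier R" "a \<in> ?I" for r a
    proof -
      obtain t where t: "t \<in> carrier R" "a = t \<otimes> (\<one> \<ominus> j)" by (rule imageE[OF h(2)]) blast
      have "r \<otimes> a = (r \<otimes> t) \<otimes> (\<one> \<ominus> j)" using jc t h(1) by (simp add: m_assoc)
      then show ?thesis using t h(1) by blast
    qed
  qed
  moreover have "\<one> \<notin> ?I" using nex by auto
  ultimately obtain M where M: "maximal_left_ideal M R" "?I \<subseteq> M"
    using exists_maximal_left_ideal by blast
  have LM: "left_ideal M R" using M unfolding maximal_left_ideal_def by blast
  have "\<one> \<ominus> j = \<one> \<otimes> (\<one> \<ominus> j)" using jc by simp
  then have "\<one> \<ominus> j \<in> M" using M(2) by blast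
  moreover have "j \<in> M" using jacobsonD[OF j M(1)] .
  ultimately have "(\<one> \<ominus> j) \<oplus> j \<in> M" using left_idealD(4)[OF LM] by blast
  then have "\<one> \<in> M" using jc by (simp add: a_minus_def a_assoc l_neg)
  then have "M = carrier R" using left_ideal_one LM by blast
  then show False using M unfolding maximal_left_ideal_def by blast
qed

end



context ring begin

lemma eq_of_minus_zero: "a \<in> carrier R \<Longrightarrow> b \<in> carrier R \<Longrightarrow> a \<ominus> b = \<zero> \<Longrightarrow> a = b"
  by (metis a_minus_def add.inv_closed add.inv_equality add.inv_inv add.m_comm)

lemma idem_jacobson_zero:
  assumes p: "p \<in> jacobson R" and pp: "p \<otimes> p = p"
  shows "p = \<zero>"
proof -
  have pc: "p \<in> carrier R" using p jacobson_carrier by blast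
  obtain v where v: "v \<in> carrier R" "v \<otimes> (\<one> \<ominus> p) = \<one>" using jacobson_left_unit[OF p] by blast
  have "p = (v \<otimes> (\<one> \<ominus> p)) \<otimes> p" using v pc by simp
  also have "\<dots> = v \<otimes> (p \<ominus> p \<otimes> p)" using v(1) pc by (algebra; simp)
  also have "\<dots> = \<zero>" using v pc pp by (simp add: a_minus_def r_neg)
  finally show ?thesis .
qed

lemma jacobson_closed_diff:
  assumes "a \<in> jacobson R" "b \<in> jacobson R" shows "a \<ominus> b \<in> jacobson R"
proof (rule jacobsonI)
  show "a \<ominus> b \<in> carrier R" using assms jacobson_carrier by blast
  fix M assume M: "maximal_left_ideal M R"
  then have "left_ideal M R" unfolding maximal_left_ideal_def by blast
  then show "a \<ominus> b \<in> M" using left_ideal_minus jacobsonD[OF _ M] assms by blast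
qed

lemma jacobson_zero: "\<zero> \<in> jacobson R"
  by (rule jacobsonI) (auto simp: maximal_left_ideal_def dest: left_idealD(2))

lemma star_basic:
  assumes "star_ring R s"
  shows "\<And>a. a \<in> carrier R \<Longrightarrow> s a \<in> carrier R"
    "\<And>a b. a \<in> carrier R \<Longrightarrow> b \<in> carrier R \<Longrightarrow> s (a \<oplus> b) = s a \<oplus> s b"
    "\<And>a b. a \<in> carrier R \<Longrightarrow> b \<in> carrier R \<Longrightarrow> s (a \<otimes> b) = s b \<otimes> s a"
    "\<And>a. a \<in> carrier R \<Longrightarrow> s (s a) = a"
  using assms unfolding star_ring_def by auto

lemma star_zero: assumes "star_ring R s" shows "s \<zero> = \<zero>"
proof -
  note st = star_basic[OF assms]
  have "s \<zero> \<oplus> s \<zero> = s \<zero> \<oplus> \<zero>" using st(2)[of \<zero> \<zero>] st(1)[of \<zero>] by simp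
  then show ?thesis using st(1)[of \<zero>] by (metis add.l_cancel zero_closed)
qed

lemma star_neg: assumes "star_ring R s" "a \<in> carrier R" shows "s (\<ominus> a) = \<ominus> s a"
proof -
  note st = star_basic[OF assms(1)]
  have "s (\<ominus> a) \<oplus> s a = \<zero>" using st(2)[of "\<ominus> a" a] assms star_zero[OF assms(1)] by (simp add: l_neg)
  then show ?thesis using st(1) assms(2) by (metis minus_equality a_inv_closed)
qed

lemma star_minus: assumes "star_ring R s" "a \<in> carrier R" "b \<in> carrier R" shows "s (a \<ominus> b) = s a \<ominus> s b"
  using assms star_neg star_basic(2)[OF assms(1)] by (simp add: a_minus_def)

lemma star_one: assumes "star_ring R s" shows "s \<one> = \<one>"
proof -
  note st = star_basic[OF assms]
  have "s (s \<one>) \<otimes> s \<one> = s (\<one> \<otimes> s \<one>)" using st one_closed by (metis)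
  then have "\<one> \<otimes> s \<one> = \<one>" using st one_closed by simp
  then show ?thesis using st(1) one_closed by simp
qed

lemma proj_central:
  assumes st: "star_ring R s" and cl: "strongly_J_star_clean R s"
    and e: "projection R s e" and r: "r \<in> carrier R"
  shows "e \<otimes> r = r \<otimes> e"
proof -
  note S = star_basic[OF st]
  have ec: "e \<in> carrier R" and ee: "e \<otimes> e = e" and se: "s e = e" using e unfolding projection_def by auto
  have key: "e \<otimes> t \<otimes> (\<one> \<ominus> e) = \<zero>" if t: "t \<in> carrier R" for t
  proof -
    define x where "x = e \<otimes> t \<otimes> (\<one> \<ominus> e)"
    have xc: "x \<in> carrier R" using t ec by (simp add: x_def)
    have ex: "e \<otimes> x = x"
    proof -
      have "e \<otimes> x = (e \<otimes> e) \<otimes> t \<otimes> (\<one> \<ominus> e)" using t ec by (simp add: x_def m_assoc)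
      then show ?thesis using ee by (simp add: x_def)
    qed
    have xe: "x \<otimes> e = \<zero>"
    proof -
      have "x \<otimes> e = e \<otimes> t \<otimes> e \<ominus> e \<otimes> t \<otimes> (e \<otimes> e)" using t ec unfolding x_def by (algebra; simp)
      then show ?thesis using ee t ec by (simp add: a_minus_def r_neg)
    qed
    have xx: "x \<otimes> x = \<zero>"
    proof -
      have "x \<otimes> x = (x \<otimes> e) \<otimes> x" using ex xc ec by (simp add: m_assoc)
      then show ?thesis using xe xc by simp
    qed
    define a where "a = e \<oplus> x"
    have ac: "a \<in> carrier R" using ec xc by (simp add: a_def)
    have aa: "a \<otimes> a = a"
    proof -
      have "a \<otimes> a = e \<otimes> e \<oplus> e \<otimes> x \<oplus> x \<otimes> e \<oplus> x \<otimes> x" using ec xc unfolding a_def by (algebra; simp)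
      then show ?thesis using ee ex xe xx ec xc by (simp add: a_def)
    qed
    obtain f u where f: "projection R s f" and u: "u \<in> jacobson R" and afu: "a = f \<oplus> u"
      and af: "a \<otimes> f = f \<otimes> a"
      using cl ac unfolding strongly_J_star_clean_def by blast
    have fc: "f \<in> carrier R" and ff: "f \<otimes> f = f" and sf: "s f = f" using f unfolding projection_def by auto
    have uc: "u \<in> carrier R" using u jacobson_carrier by blast
    have ueq: "u = a \<ominus> f" using afu fc uc by (simp add: a_minus_def) algebra
    have uJ: "a \<ominus> f \<in> jacobson R" using u ueq by simp
    have p1: "a \<otimes> (\<one> \<ominus> f) = \<zero>"
    proof (rule idem_jacobson_zero)
      have "a \<otimes> (\<one> \<ominus> f) = a \<otimes> (a \<ominus> f)" using ac fc aa by (simp add: r_minus a_minus_def r_distr)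
      then show "a \<otimes> (\<one> \<ominus> f) \<in> jacobson R" using jacobson_lmult[OF uJ ac] by simp
      have "a \<otimes> (\<one> \<ominus> f) \<otimes> (a \<otimes> (\<one> \<ominus> f)) = a \<otimes> a \<ominus> a \<otimes> a \<otimes> f \<ominus> a \<otimes> (f \<otimes> a) \<oplus> a \<otimes> (f \<otimes> a) \<otimes> f"
        using ac fc by (algebra; simp)
      also have "\<dots> = a \<ominus> a \<otimes> f \<ominus> a \<otimes> f \<oplus> a \<otimes> f"
        using ac fc aa ff by (simp add: af[symmetric] m_assoc[symmetric]) (simp add: m_assoc)
      also have "\<dots> = a \<otimes> (\<one> \<ominus> f)" using ac fc by (algebra; simp)
      finally show "a \<otimes> (\<one> \<ominus> f) \<otimes> (a \<otimes> (\<one> \<ominus> f)) = a \<otimes> (\<one> \<ominus> f)" .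
    qed
    have p2: "f \<otimes> (\<one> \<ominus> a) = \<zero>"
    proof (rule idem_jacobson_zero)
      have "f \<otimes> (\<one> \<ominus> a) = (\<ominus> f) \<otimes> (a \<ominus> f)" using ac fc ff by (simp add: r_minus a_minus_def r_distr l_minus) algebra
      then show "f \<otimes> (\<one> \<ominus> a) \<in> jacobson R" using jacobson_lmult[OF uJ a_inv_closed[OF fc]] by simp
      have "f \<otimes> (\<one> \<ominus> a) \<otimes> (f \<otimes> (\<one> \<ominus> a)) = f \<otimes> f \<ominus> f \<otimes> f \<otimes> a \<ominus> f \<otimes> (a \<otimes> f) \<oplus> f \<otimes> (a \<otimes> f) \<otimes> a"
        using ac fc by (algebra; simp)
      also have "\<dots> = f \<ominus> f \<otimes> a \<ominus> f \<otimes> a \<oplus> f \<otimes> a"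
        using ac fc aa ff by (simp add: af m_assoc[symmetric]) (simp add: m_assoc)
      also have "\<dots> = f \<otimes> (\<one> \<ominus> a)" using ac fc by (algebra; simp)
      finally show "f \<otimes> (\<one> \<ominus> a) \<otimes> (f \<otimes> (\<one> \<ominus> a)) = f \<otimes> (\<one> \<ominus> a)" .
    qed
    have "a \<ominus> a \<otimes> f = \<zero>" using p1 ac fc by (simp add: r_minus a_minus_def r_distr)
    then have a1: "a = a \<otimes> f" using ac fc by (metis eq_of_minus_zero m_closed)
    have "f \<ominus> f \<otimes> a = \<zero>" using p2 ac fc by (simp add: r_minus a_minus_def r_distr)
    then have f1: "f = f \<otimes> a" using ac fc by (metis eq_of_minus_zero m_closed)
    have "a = f" using a1 f1 af by metis
    then have sa: "s a = a" using sf by simp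
    have "s a = e \<oplus> s x" using S ec xc se by (simp add: a_def)
    then have "e \<oplus> s x = e \<oplus> x" using sa a_def by simp
    then have sx: "s x = x" using S(1)[OF xc] xc ec by (metis add.l_cancel)
    have "s x = s (\<one> \<ominus> e) \<otimes> s (e \<otimes> t)" using S t ec by (simp add: x_def)
    also have "\<dots> = (\<one> \<ominus> e) \<otimes> (s t \<otimes> e)" using S t ec se star_minus[OF st] star_one[OF st] by simp
    finally have "x = (\<one> \<ominus> e) \<otimes> (s t \<otimes> e)" using sx by simp
    then have "e \<otimes> x = (e \<ominus> e \<otimes> e) \<otimes> (s t \<otimes> e)" using S t ec by simp algebra
    also have "\<dots> = \<zero>" using ee S t ec by (simp add: a_minus_def r_neg)
    finally show ?thesis using ex x_def by simp
  qed
  have er: "e \<otimes> t = e \<otimes> t \<otimes> e" if t: "t \<in> carrier R" for t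
  proof -
    have "e \<otimes> t \<ominus> e \<otimes> t \<otimes> e = e \<otimes> t \<otimes> (\<one> \<ominus> e)" using t ec by (algebra; simp)
    then show ?thesis using key[OF t] t ec by (metis eq_of_minus_zero m_closed)
  qed
  have "e \<otimes> s r = e \<otimes> s r \<otimes> e" using er S r by simp
  then have "s (e \<otimes> s r) = s (e \<otimes> s r \<otimes> e)" by simp
  then have "r \<otimes> e = e \<otimes> (r \<otimes> e)" using S r ec se by simp
  also have "\<dots> = e \<otimes> r" using er[OF r] r ec by (simp add: m_assoc)
  finally show ?thesis by simp
qed

end



definition PSc :: "('a, 'm) ring_scheme \<Rightarrow> 'a \<Rightarrow> nat \<Rightarrow> 'a" where
  "PSc R a = (\<lambda>n. if n = 0 then a else \<zero>\<^bsub>R\<^esub>)"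

primrec Hs :: "('a, 'm) ring_scheme \<Rightarrow> (nat \<Rightarrow> 'a) \<Rightarrow> nat \<Rightarrow> nat \<Rightarrow> 'a" where
  "Hs R k 0 = (\<lambda>i. \<one>\<^bsub>R\<^esub>)"
| "Hs R k (Suc n) = (Hs R k n)(Suc n := \<ominus>\<^bsub>R\<^esub> (\<Oplus>\<^bsub>R\<^esub> i\<in>{..n}. Hs R k n i \<otimes>\<^bsub>R\<^esub> k (Suc n - i)))"

context ring begin

lemma PS_mult_0: "f \<in> carrier (PS R) \<Longrightarrow> g \<in> carrier (PS R) \<Longrightarrow> (f \<otimes>\<^bsub>PS R\<^esub> g) 0 = f 0 \<otimes> g 0"
  by (simp add: PS_simps PS_carrier_iff)

lemma PSc_carrier: "a \<in> carrier R \<Longrightarrow> PSc R a \<in> carrier (PS R)"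
  by (simp add: PSc_def PS_simps PS_carrier_iff)

lemma PS_carrierD: "f \<in> carrier (PS R) \<Longrightarrow> f i \<in> carrier R"
  by (simp add: PS_simps PS_carrier_iff)

lemma PS_carrierI: "(\<And>i. f i \<in> carrier R) \<Longrightarrow> f \<in> carrier (PS R)"
  by (simp add: PS_simps PS_carrier_iff)

lemma PSc_mult_left:
  assumes f: "f \<in> carrier (PS R)" and a: "a \<in> carrier R"
  shows "(PSc R a \<otimes>\<^bsub>PS R\<^esub> f) n = a \<otimes> f n"
proof -
  have fc: "\<And>i. f i \<in> carrier R" using f PS_carrierD by blast
  have "(PSc R a \<otimes>\<^bsub>PS R\<^esub> f) n = (\<Oplus>i\<in>{..n}. (if i = 0 then a \<otimes> f n else \<zero>))"
    unfolding PS_simps PSc_def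
    apply (rule finsum_cong')
    apply simp
    apply (simp add: fc a)
    apply (simp add: fc a)
    done
  also have "\<dots> = a \<otimes> f n" by (rule finsum_single) (auto simp: fc a)
  finally show ?thesis .
qed

lemma PSc_mult_right:
  assumes f: "f \<in> carrier (PS R)" and a: "a \<in> carrier R"
  shows "(f \<otimes>\<^bsub>PS R\<^esub> PSc R a) n = f n \<otimes> a"
proof -
  have fc: "\<And>i. f i \<in> carrier R" using f PS_carrierD by blast
  have "(f \<otimes>\<^bsub>PS R\<^esub> PSc R a) n = (\<Oplus>i\<in>{..n}. (if i = n then f n \<otimes> a else \<zero>))"
    unfolding PS_simps PSc_def
    apply (rule finsum_cong')
    apply simp
    apply (simp add: fc a)
    apply (auto simp add: fc a)
    done
  also have "\<dots> = f n \<otimes> a" by (rule finsum_single) (auto simp: fc a)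
  finally show ?thesis .
qed

lemma PS_neg:
  assumes f: "f \<in> carrier (PS R)"
  shows "\<ominus>\<^bsub>PS R\<^esub> f = (\<lambda>n. \<ominus> f n)"
proof -
  interpret P: ring "PS R" by (rule PS_ring)
  have fc: "\<And>i. f i \<in> carrier R" using f PS_carrierD by blast
  show ?thesis
    by (rule P.minus_equality) (use f in \<open>auto simp: PS_simps PS_carrier_iff fc l_neg\<close>)
qed

lemma PS_minus:
  assumes f: "f \<in> carrier (PS R)" and g: "g \<in> carrier (PS R)"
  shows "f \<ominus>\<^bsub>PS R\<^esub> g = (\<lambda>n. f n \<ominus> g n)"
  using PS_neg[OF g] by (simp add: a_minus_def PS_simps)

lemma Hs_carrier: "k \<in> carrier (PS R) \<Longrightarrow> Hs R k n i \<in> carrier R"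
proof (induction n arbitrary: i)
  case 0 then show ?case by simp
next
  case (Suc n)
  then show ?case using PS_carrierD[OF Suc.prems] by (auto intro!: finsum_closed)
qed

lemma Hs_stable: "i \<le> n \<Longrightarrow> n \<le> m \<Longrightarrow> Hs R k m i = Hs R k n i"
proof (induction m)
  case 0 then show ?case by simp
next
  case (Suc m)
  show ?case
  proof (cases "n = Suc m")
    case True then show ?thesis by simp
  next
    case False
    then have "n \<le> m" using Suc.prems by simp
    then show ?thesis using Suc by simp
  qed
qed

lemma PS_left_inv:
  assumes k: "k \<in> carrier (PS R)" and k0: "k 0 = \<one>"
  shows "\<exists>h\<in>carrier (PS R). h \<otimes>\<^bsub>PS R\<^esub> k = \<one>\<^bsub>PS R\<^esub>"
proof -
  define h where "h = (\<lambda>i. Hs R k i i)"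
  have kc: "\<And>i. k i \<in> carrier R" using k PS_carrierD by blast
  have hc: "\<And>i. h i \<in> carrier R" using Hs_carrier[OF k] by (simp add: h_def)
  have Hh: "Hs R k n i = h i" if "i \<le> n" for i n using Hs_stable[OF order_refl that] by (simp add: h_def)
  have hS: "h (Suc n) = \<ominus> (\<Oplus>i\<in>{..n}. h i \<otimes> k (Suc n - i))" for n
  proof -
    have "h (Suc n) = \<ominus> (\<Oplus>i\<in>{..n}. Hs R k n i \<otimes> k (Suc n - i))" by (simp add: h_def)
    also have "(\<Oplus>i\<in>{..n}. Hs R k n i \<otimes> k (Suc n - i)) = (\<Oplus>i\<in>{..n}. h i \<otimes> k (Suc n - i))"
      by (rule finsum_cong') (auto simp: Hh hc kc)
    finally show ?thesis .
  qed
  have "h \<otimes>\<^bsub>PS R\<^esub> k = \<one>\<^bsub>PS R\<^esub>"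
  proof (rule ext)
    fix n show "(h \<otimes>\<^bsub>PS R\<^esub> k) n = \<one>\<^bsub>PS R\<^esub> n"
    proof (cases n)
      case 0 then show ?thesis using k0 kc by (simp add: PS_simps h_def)
    next
      case (Suc m)
      have "(h \<otimes>\<^bsub>PS R\<^esub> k) n = h (Suc m) \<otimes> k 0 \<oplus> (\<Oplus>i\<in>{..m}. h i \<otimes> k (Suc m - i))"
        using Suc hc kc by (simp add: PS_simps)
      also have "\<dots> = \<zero>" using hS[of m] k0 hc kc by (simp add: l_neg finsum_closed)
      finally show ?thesis using Suc by (simp add: PS_simps)
    qed
  qed
  moreover have "h \<in> carrier (PS R)" using hc by (rule PS_carrierI)
  ultimately show ?thesis by blast
qed

end



context ring begin

lemma PS_zero0: "\<zero>\<^bsub>PS R\<^esub> 0 = \<zero>" by (simp add: PS_simps)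
lemma PS_one0: "\<one>\<^bsub>PS R\<^esub> 0 = \<one>" by (simp add: PS_simps)
lemma PS_add_apply: "(f \<oplus>\<^bsub>PS R\<^esub> g) n = f n \<oplus> g n" by (simp add: PS_simps)

lemma lift_left_ideal:
  assumes L: "left_ideal L R"
  shows "left_ideal {g \<in> carrier (PS R). g 0 \<in> L} (PS R)"
proof -
  interpret P: ring "PS R" by (rule PS_ring)
  note LD = left_idealD[OF L]
  show ?thesis
  proof (rule P.left_idealI)
    show "{g \<in> carrier (PS R). g 0 \<in> L} \<subseteq> carrier (PS R)" by blast
    show "\<zero>\<^bsub>PS R\<^esub> \<in> {g \<in> carrier (PS R). g 0 \<in> L}" using LD(2) by (simp add: PS_zero0)
    show "\<ominus>\<^bsub>PS R\<^esub> a \<in> {g \<in> carrier (PS R). g 0 \<in> L}" if h: "a \<in> {g \<in> carrier (PS R). g 0 \<in> L}" for a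
      using h LD(3) PS_neg[of a] P.a_inv_closed[of a] by auto
    show "a \<oplus>\<^bsub>PS R\<^esub> b \<in> {g \<in> carrier (PS R). g 0 \<in> L}"
      if h: "a \<in> {g \<in> carrier (PS R). g 0 \<in> L}" "b \<in> {g \<in> carrier (PS R). g 0 \<in> L}" for a b
      using h LD(4) by (auto simp: PS_add_apply)
    show "r \<otimes>\<^bsub>PS R\<^esub> a \<in> {g \<in> carrier (PS R). g 0 \<in> L}"
      if h: "r \<in> carrier (PS R)" "a \<in> {g \<in> carrier (PS R). g 0 \<in> L}" for r a
      using h LD(5) PS_mult_0[of r a] PS_carrierD by auto
  qed
qed

lemma proj0_left_ideal:
  assumes K: "left_ideal K (PS R)"
  shows "left_ideal ((\<lambda>k. k 0) ` K) R"
proof -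
  interpret P: ring "PS R" by (rule PS_ring)
  note KD = P.left_idealD[OF K]
  show ?thesis
  proof (rule left_idealI)
    show "(\<lambda>k. k 0) ` K \<subseteq> carrier R" using KD(1) PS_carrierD by blast
    have "\<zero> = \<zero>\<^bsub>PS R\<^esub> 0" by (simp add: PS_zero0)
    then show "\<zero> \<in> (\<lambda>k. k 0) ` K" using KD(2) by blast
    show "\<ominus> a \<in> (\<lambda>k. k 0) ` K" if h: "a \<in> (\<lambda>k. k 0) ` K" for a
    proof -
      obtain k where k: "k \<in> K" "a = k 0" using h by blast
      then have "\<ominus> a = (\<ominus>\<^bsub>PS R\<^esub> k) 0" using PS_neg[of k] KD(1) by auto
      then show ?thesis using KD(3) k by blast
    qed
    show "a \<oplus> b \<in> (\<lambda>k. k 0) ` K" if h: "a \<in> (\<lambda>k. k 0) ` K" "b \<in> (\<lambda>k. k 0) ` K" for a b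
    proof -
      obtain k where k: "k \<in> K" "a = k 0" using h by blast
      obtain l where l: "l \<in> K" "b = l 0" using h by blast
      have "a \<oplus> b = (k \<oplus>\<^bsub>PS R\<^esub> l) 0" using k l by (simp add: PS_add_apply)
      then show ?thesis using KD(4) k l by blast
    qed
    show "r \<otimes> a \<in> (\<lambda>k. k 0) ` K" if h: "r \<in> carrier R" "a \<in> (\<lambda>k. k 0) ` K" for r a
    proof -
      obtain k where k: "k \<in> K" "a = k 0" using h by blast
      have "r \<otimes> a = (PSc R r \<otimes>\<^bsub>PS R\<^esub> k) 0" using k h(1) KD(1) PSc_mult_left by auto
      then show ?thesis using KD(5) k h(1) PSc_carrier by blast
    qed
  qed
qed

lemma lift_maximal:
  assumes M: "maximal_left_ideal M R"
  shows "maximal_left_ideal {g \<in> carrier (PS R). g 0 \<in> M} (PS R)"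
proof -
  interpret P: ring "PS R" by (rule PS_ring)
  let ?M = "{g \<in> carrier (PS R). g 0 \<in> M}"
  have LM: "left_ideal M R" and Mne: "M \<noteq> carrier R"
    and Mmax: "\<And>K. left_ideal K R \<Longrightarrow> M \<subseteq> K \<Longrightarrow> K \<noteq> carrier R \<Longrightarrow> K = M"
    using M unfolding maximal_left_ideal_def by blast+
  have one: "\<one> \<notin> M" using left_ideal_one[OF LM] Mne by blast
  show ?thesis unfolding maximal_left_ideal_def
  proof (intro conjI allI impI)
    show "left_ideal ?M (PS R)" using lift_left_ideal[OF LM] .
    show "?M \<noteq> carrier (PS R)"
    proof
      assume "?M = carrier (PS R)"
      then have "\<one>\<^bsub>PS R\<^esub> \<in> ?M" using P.one_closed by simp
      then show False using one PS_one0 by simp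
    qed
    fix K assume K: "left_ideal K (PS R) \<and> ?M \<subseteq> K \<and> K \<noteq> carrier (PS R)"
    note KD = P.left_idealD[OF K[THEN conjunct1]]
    let ?K0 = "(\<lambda>k. k 0) ` K"
    have "M \<subseteq> ?K0"
    proof
      fix m assume m: "m \<in> M"
      then have mc: "m \<in> carrier R" using left_idealD(1)[OF LM] by blast
      have "PSc R m \<in> ?M" using m mc PSc_carrier by (simp add: PSc_def)
      then have "PSc R m \<in> K" using K by blast
      moreover have "PSc R m 0 = m" by (simp add: PSc_def)
      ultimately show "m \<in> ?K0" using rev_image_eqI[of "PSc R m" K m "\<lambda>k. k 0"] by simp
    qed
    moreover have "?K0 \<noteq> carrier R"
    proof
      assume "?K0 = carrier R"
      then have "\<one> \<in> ?K0" using one_closed by simp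
      then obtain k where k: "k \<in> K" "k 0 = \<one>" by (metis imageE)
      have kc: "k \<in> carrier (PS R)" using k KD(1) by blast
      have "k \<ominus>\<^bsub>PS R\<^esub> \<one>\<^bsub>PS R\<^esub> \<in> ?M"
        using k kc P.one_closed left_idealD(2)[OF LM] P.minus_closed[OF kc P.one_closed] by (simp add: PS_minus PS_one0 PS_carrierD r_neg minus_eq)
      then have "k \<ominus>\<^bsub>PS R\<^esub> \<one>\<^bsub>PS R\<^esub> \<in> K" using K by blast
      then have "k \<ominus>\<^bsub>PS R\<^esub> (k \<ominus>\<^bsub>PS R\<^esub> \<one>\<^bsub>PS R\<^esub>) \<in> K" using P.left_ideal_minus[OF K[THEN conjunct1] k(1)] by blast
      moreover have "k \<ominus>\<^bsub>PS R\<^esub> (k \<ominus>\<^bsub>PS R\<^esub> \<one>\<^bsub>PS R\<^esub>) = \<one>\<^bsub>PS R\<^esub>" using kc P.one_closed by (algebra; simp)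
      ultimately have "\<one>\<^bsub>PS R\<^esub> \<in> K" by simp
      then show False using P.left_ideal_one K by blast
    qed
    ultimately have K0M: "?K0 = M" using Mmax proj0_left_ideal K by blast
    show "K = ?M"
    proof
      show "K \<subseteq> ?M" using K0M KD(1) by blast
      show "?M \<subseteq> K" using K by blast
    qed
  qed
qed

lemma jac_PS_lower:
  assumes f: "f \<in> jacobson (PS R)"
  shows "f 0 \<in> jacobson R"
proof (rule jacobsonI)
  interpret P: ring "PS R" by (rule PS_ring)
  show "f 0 \<in> carrier R" using f P.jacobson_carrier PS_carrierD by blast
  fix M assume "maximal_left_ideal M R"
  then have "maximal_left_ideal {g \<in> carrier (PS R). g 0 \<in> M} (PS R)" by (rule lift_maximal)
  then show "f 0 \<in> M" using P.jacobsonD[OF f] by blast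
qed

lemma jac_PS_upper:
  assumes f: "f \<in> carrier (PS R)" and f0: "f 0 \<in> jacobson R"
  shows "f \<in> jacobson (PS R)"
proof -
  interpret P: ring "PS R" by (rule PS_ring)
  show ?thesis
  proof (rule P.jacobsonI)
    show "f \<in> carrier (PS R)" by (rule f)
    fix K assume Kmax: "maximal_left_ideal K (PS R)"
    have LK: "left_ideal K (PS R)" and Kne: "K \<noteq> carrier (PS R)"
      and Kmx: "\<And>L. left_ideal L (PS R) \<Longrightarrow> K \<subseteq> L \<Longrightarrow> L \<noteq> carrier (PS R) \<Longrightarrow> L = K"
      using Kmax unfolding maximal_left_ideal_def by blast+
    note KD = P.left_idealD[OF LK]
    have noone: "k 0 \<noteq> \<one>" if k: "k \<in> K" for k
    proof
      assume k0: "k 0 = \<one>"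
      have kc: "k \<in> carrier (PS R)" using k KD(1) by blast
      obtain h where h: "h \<in> carrier (PS R)" "h \<otimes>\<^bsub>PS R\<^esub> k = \<one>\<^bsub>PS R\<^esub>" using PS_left_inv[OF kc k0] by blast
      have "\<one>\<^bsub>PS R\<^esub> \<in> K" using KD(5)[OF h(1) k] h(2) by simp
      then show False using P.left_ideal_one[OF LK] Kne by blast
    qed
    have step_a: "g \<in> K" if g: "g \<in> carrier (PS R)" "g 0 = \<zero>" for g
    proof (rule ccontr)
      assume gK: "g \<notin> K"
      define L where "L = {k \<oplus>\<^bsub>PS R\<^esub> h \<otimes>\<^bsub>PS R\<^esub> g | k h. k \<in> K \<and> h \<in> carrier (PS R)}"
      have LL: "left_ideal L (PS R)"
      proof (rule P.left_idealI)
        show "L \<subseteq> carrier (PS R)" using KD(1) g unfolding L_def by blast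
        have "\<zero>\<^bsub>PS R\<^esub> = \<zero>\<^bsub>PS R\<^esub> \<oplus>\<^bsub>PS R\<^esub> \<zero>\<^bsub>PS R\<^esub> \<otimes>\<^bsub>PS R\<^esub> g" using g by simp
        then show "\<zero>\<^bsub>PS R\<^esub> \<in> L" using KD(2) unfolding L_def by blast
        show "\<ominus>\<^bsub>PS R\<^esub> a \<in> L" if h: "a \<in> L" for a
        proof -
          obtain k t where kt: "a = k \<oplus>\<^bsub>PS R\<^esub> t \<otimes>\<^bsub>PS R\<^esub> g" "k \<in> K" "t \<in> carrier (PS R)" using h unfolding L_def by blast
          have kc: "k \<in> carrier (PS R)" using kt KD(1) by blast
          have "\<ominus>\<^bsub>PS R\<^esub> a = (\<ominus>\<^bsub>PS R\<^esub> k) \<oplus>\<^bsub>PS R\<^esub> (\<ominus>\<^bsub>PS R\<^esub> t) \<otimes>\<^bsub>PS R\<^esub> g"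
            using kt(1) kc kt(3) g(1) by (algebra; simp)
          then show ?thesis using KD(3) kt unfolding L_def by blast
        qed
        show "a \<oplus>\<^bsub>PS R\<^esub> b \<in> L" if h: "a \<in> L" "b \<in> L" for a b
        proof -
          obtain k t where kt: "a = k \<oplus>\<^bsub>PS R\<^esub> t \<otimes>\<^bsub>PS R\<^esub> g" "k \<in> K" "t \<in> carrier (PS R)" using h(1) unfolding L_def by blast
          obtain k' t' where kt': "b = k' \<oplus>\<^bsub>PS R\<^esub> t' \<otimes>\<^bsub>PS R\<^esub> g" "k' \<in> K" "t' \<in> carrier (PS R)" using h(2) unfolding L_def by blast
          have kc: "k \<in> carrier (PS R)" "k' \<in> carrier (PS R)" using kt kt' KD(1) by blast+
          have "a \<oplus>\<^bsub>PS R\<^esub> b = (k \<oplus>\<^bsub>PS R\<^esub> k') \<oplus>\<^bsub>PS R\<^esub> (t \<oplus>\<^bsub>PS R\<^esub> t') \<otimes>\<^bsub>PS R\<^esub> g"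
            using kt(1) kt'(1) kc kt(3) kt'(3) g(1) by (algebra; simp)
          then show ?thesis using KD(4) kt kt' unfolding L_def by blast
        qed
        show "r \<otimes>\<^bsub>PS R\<^esub> a \<in> L" if h: "r \<in> carrier (PS R)" "a \<in> L" for r a
        proof -
          obtain k t where kt: "a = k \<oplus>\<^bsub>PS R\<^esub> t \<otimes>\<^bsub>PS R\<^esub> g" "k \<in> K" "t \<in> carrier (PS R)" using h(2) unfolding L_def by blast
          have kc: "k \<in> carrier (PS R)" using kt KD(1) by blast
          have "r \<otimes>\<^bsub>PS R\<^esub> a = (r \<otimes>\<^bsub>PS R\<^esub> k) \<oplus>\<^bsub>PS R\<^esub> (r \<otimes>\<^bsub>PS R\<^esub> t) \<otimes>\<^bsub>PS R\<^esub> g"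
            using kt(1) kc kt(3) g(1) h(1) by (algebra; simp)
          then show ?thesis using KD(5) kt h(1) unfolding L_def by blast
        qed
      qed
      have KL: "K \<subseteq> L"
      proof
        fix k assume k: "k \<in> K"
        then have "k = k \<oplus>\<^bsub>PS R\<^esub> \<zero>\<^bsub>PS R\<^esub> \<otimes>\<^bsub>PS R\<^esub> g" using KD(1) g by auto
        then show "k \<in> L" using k unfolding L_def by blast
      qed
      have "g = \<zero>\<^bsub>PS R\<^esub> \<oplus>\<^bsub>PS R\<^esub> \<one>\<^bsub>PS R\<^esub> \<otimes>\<^bsub>PS R\<^esub> g" using g by simp
      then have "g \<in> L" using KD(2) unfolding L_def by blast
      then have "L \<noteq> K" using gK by blast
      then have "L = carrier (PS R)" using Kmx LL KL by blast
      then have "\<one>\<^bsub>PS R\<^esub> \<in> L" by simp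
      then obtain k t where kt: "\<one>\<^bsub>PS R\<^esub> = k \<oplus>\<^bsub>PS R\<^esub> t \<otimes>\<^bsub>PS R\<^esub> g" "k \<in> K" "t \<in> carrier (PS R)" unfolding L_def by blast
      have kc: "k \<in> carrier (PS R)" using kt KD(1) by blast
      have "\<one> = k 0 \<oplus> t 0 \<otimes> g 0"
        using arg_cong[OF kt(1), of "\<lambda>f. f 0"] PS_mult_0[OF kt(3) g(1)] by (simp add: PS_one0 PS_add_apply)
      then have "k 0 = \<one>" using g(2) PS_carrierD[OF kt(3)] PS_carrierD[OF kc] by simp
      then show False using noone kt(2) by blast
    qed
    let ?K0 = "(\<lambda>k. k 0) ` K"
    have LK0: "left_ideal ?K0 R" using proj0_left_ideal[OF LK] .
    have K0ne: "?K0 \<noteq> carrier R"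
    proof
      assume "?K0 = carrier R"
      then have "\<one> \<in> ?K0" using one_closed by simp
      then obtain k where "k \<in> K" "\<one> = k 0" by blast
      then show False using noone by metis
    qed
    have K0max: "maximal_left_ideal ?K0 R" unfolding maximal_left_ideal_def
    proof (intro conjI allI impI)
      show "left_ideal ?K0 R" by (rule LK0)
      show "?K0 \<noteq> carrier R" by (rule K0ne)
      fix L assume L: "left_ideal L R \<and> ?K0 \<subseteq> L \<and> L \<noteq> carrier R"
      let ?L = "{g \<in> carrier (PS R). g 0 \<in> L}"
      have LL: "left_ideal ?L (PS R)" using lift_left_ideal L by blast
      have "K \<subseteq> ?L" using L KD(1) by blast
      moreover have "?L \<noteq> carrier (PS R)"
      proof
        assume "?L = carrier (PS R)"
        then have "\<one>\<^bsub>PS R\<^esub> \<in> ?L" using P.one_closed by simp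
        then have "\<one> \<in> L" using PS_one0 by simp
        then show False using left_ideal_one L by blast
      qed
      ultimately have LK: "?L = K" using Kmx LL by blast
      show "L = ?K0"
      proof
        show "?K0 \<subseteq> L" using L by blast
        show "L \<subseteq> ?K0"
        proof
          fix l assume l: "l \<in> L"
          then have lc: "l \<in> carrier R" using left_idealD(1) L by blast
          then have "PSc R l \<in> ?L" using l PSc_carrier by (simp add: PSc_def)
          then have "PSc R l \<in> K" using LK by blast
          moreover have "PSc R l 0 = l" by (simp add: PSc_def)
          ultimately show "l \<in> ?K0" using rev_image_eqI[of "PSc R l" K l "\<lambda>k. k 0"] by simp
        qed
      qed
    qed
    then have "f 0 \<in> ?K0" using jacobsonD[OF f0] by blast
    then obtain k where k: "k \<in> K" "f 0 = k 0" by blast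
    have kc: "k \<in> carrier (PS R)" using k KD(1) by blast
    have "f \<ominus>\<^bsub>PS R\<^esub> k \<in> K"
      using step_a[of "f \<ominus>\<^bsub>PS R\<^esub> k"] f kc k(2) P.minus_closed[OF f kc] by (simp add: PS_minus PS_carrierD)
    then have "(f \<ominus>\<^bsub>PS R\<^esub> k) \<oplus>\<^bsub>PS R\<^esub> k \<in> K" using KD(4) k by blast
    moreover have "(f \<ominus>\<^bsub>PS R\<^esub> k) \<oplus>\<^bsub>PS R\<^esub> k = f" using f kc by (algebra; simp)
    ultimately show "f \<in> K" by simp
  qed
qed

end



context ring begin

lemma PSc_mult_PSc: "a \<in> carrier R \<Longrightarrow> b \<in> carrier R \<Longrightarrow> PSc R a \<otimes>\<^bsub>PS R\<^esub> PSc R b = PSc R (a \<otimes> b)"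
  by (rule ext) (simp add: PSc_mult_left PSc_carrier, simp add: PSc_def)

lemma PS_star_PSc: "star_ring R s \<Longrightarrow> PS_star s (PSc R e) = PSc R (s e)"
  by (rule ext) (simp add: PS_star_def PSc_def star_zero)

lemma clean_R_to_PS:
  assumes st: "star_ring R s" and cl: "strongly_J_star_clean R s"
  shows "strongly_J_star_clean (PS R) (PS_star s)"
  unfolding strongly_J_star_clean_def
proof
  interpret P: ring "PS R" by (rule PS_ring)
  fix f assume f: "f \<in> carrier (PS R)"
  obtain e u where e: "projection R s e" and u: "u \<in> jacobson R" and f0: "f 0 = e \<oplus> u"
    and fe: "f 0 \<otimes> e = e \<otimes> f 0"
    using cl PS_carrierD[OF f] unfolding strongly_J_star_clean_def by blast
  have ec: "e \<in> carrier R" and ee: "e \<otimes> e = e" and se: "s e = e" using e unfolding projection_def by auto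
  have uc: "u \<in> carrier R" using u jacobson_carrier by blast
  define E where "E = PSc R e"
  have Ec: "E \<in> carrier (PS R)" using ec PSc_carrier by (simp add: E_def)
  define U where "U = f \<ominus>\<^bsub>PS R\<^esub> E"
  have Uc: "U \<in> carrier (PS R)" using f Ec by (simp add: U_def)
  have "projection (PS R) (PS_star s) E"
    unfolding projection_def using Ec PSc_mult_PSc[OF ec ec] ee PS_star_PSc[OF st] se by (simp add: E_def)
  moreover have "U \<in> jacobson (PS R)"
  proof (rule jac_PS_upper[OF Uc])
    have "U 0 = f 0 \<ominus> e" using PS_minus[OF f Ec] by (simp add: U_def E_def PSc_def)
    also have "\<dots> = u" using f0 ec uc by (algebra; simp)
    finally show "U 0 \<in> jacobson R" using u by simp
  qed
  moreover have "f = E \<oplus>\<^bsub>PS R\<^esub> U" using f Ec unfolding U_def by (algebra; simp)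
  moreover have "f \<otimes>\<^bsub>PS R\<^esub> E = E \<otimes>\<^bsub>PS R\<^esub> f"
  proof (rule ext)
    fix n
    have "(f \<otimes>\<^bsub>PS R\<^esub> E) n = f n \<otimes> e" using PSc_mult_right[OF f ec] by (simp add: E_def)
    also have "\<dots> = e \<otimes> f n" using proj_central[OF st cl e PS_carrierD[OF f]] by simp
    also have "\<dots> = (E \<otimes>\<^bsub>PS R\<^esub> f) n" using PSc_mult_left[OF f ec] by (simp add: E_def)
    finally show "(f \<otimes>\<^bsub>PS R\<^esub> E) n = (E \<otimes>\<^bsub>PS R\<^esub> f) n" .
  qed
  ultimately show "\<exists>E U. projection (PS R) (PS_star s) E \<and> U \<in> jacobson (PS R) \<and>
      f = E \<oplus>\<^bsub>PS R\<^esub> U \<and> f \<otimes>\<^bsub>PS R\<^esub> E = E \<otimes>\<^bsub>PS R\<^esub> f" by blast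
qed

lemma clean_PS_to_R:
  assumes st: "star_ring R s" and cl: "strongly_J_star_clean (PS R) (PS_star s)"
  shows "strongly_J_star_clean R s"
  unfolding strongly_J_star_clean_def
proof
  interpret P: ring "PS R" by (rule PS_ring)
  fix a assume a: "a \<in> carrier R"
  define F where "F = PSc R a"
  have Fc: "F \<in> carrier (PS R)" using a PSc_carrier by (simp add: F_def)
  obtain E U where E: "projection (PS R) (PS_star s) E" and U: "U \<in> jacobson (PS R)"
    and FEU: "F = E \<oplus>\<^bsub>PS R\<^esub> U" and FE: "F \<otimes>\<^bsub>PS R\<^esub> E = E \<otimes>\<^bsub>PS R\<^esub> F"
    using cl Fc unfolding strongly_J_star_clean_def by blast
  have Ec: "E \<in> carrier (PS R)" and EE: "E \<otimes>\<^bsub>PS R\<^esub> E = E" and sE: "PS_star s E = E"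
    using E unfolding projection_def by auto
  have "projection R s (E 0)"
    unfolding projection_def using PS_carrierD[OF Ec] PS_mult_0[OF Ec Ec] EE
      arg_cong[OF sE, of "\<lambda>g. g 0"] by (simp add: PS_star_def)
  moreover have "U 0 \<in> jacobson R" using jac_PS_lower[OF U] .
  moreover have "a = E 0 \<oplus> U 0" using arg_cong[OF FEU, of "\<lambda>g. g 0"] by (simp add: F_def PSc_def PS_add_apply)
  moreover have "a \<otimes> E 0 = E 0 \<otimes> a"
    using arg_cong[OF FE, of "\<lambda>g. g 0"] PS_mult_0[OF Fc Ec] PS_mult_0[OF Ec Fc] by (simp add: F_def PSc_def)
  ultimately show "\<exists>e u. projection R s e \<and> u \<in> jacobson R \<and> a = e \<oplus> u \<and> a \<otimes> e = e \<otimes> a" by blast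
qed

end



definition Zs :: "('a, 'm) ring_scheme \<Rightarrow> nat \<Rightarrow> (nat \<Rightarrow> 'a) set" where
  "Zs R n = {f \<in> carrier (PS R). \<forall>i<n. f i = \<zero>\<^bsub>R\<^esub>}"

definition delta :: "('a, 'm) ring_scheme \<Rightarrow> nat \<Rightarrow> nat \<Rightarrow> 'a" where
  "delta R n = (\<lambda>i. if i = n then \<one>\<^bsub>R\<^esub> else \<zero>\<^bsub>R\<^esub>)"

context ring begin

lemma finsum_zero_cong:
  assumes "\<And>i. i \<in> A \<Longrightarrow> f i = \<zero>"
  shows "(\<Oplus>i\<in>A. f i) = \<zero>"
proof -
  have "(\<Oplus>i\<in>A. f i) = (\<Oplus>i\<in>A. \<zero>)" by (rule finsum_cong') (auto simp: assms)
  then show ?thesis by simp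
qed

lemma delta_carrier: "delta R n \<in> carrier (PS R)"
  by (rule PS_carrierI) (simp add: delta_def)

lemma delta_mult:
  assumes g: "g \<in> carrier (PS R)"
  shows "(delta R n \<otimes>\<^bsub>PS R\<^esub> g) m = (if n \<le> m then g (m - n) else \<zero>)"
proof -
  have gc: "\<And>i. g i \<in> carrier R" using g PS_carrierD by blast
  have "(delta R n \<otimes>\<^bsub>PS R\<^esub> g) m = (\<Oplus>i\<in>{..m}. (if i = n then g (m - n) else \<zero>))"
    unfolding PS_simps delta_def
    apply (rule finsum_cong')
    apply simp
    apply (simp add: gc)
    apply (simp add: gc)
    done
  also have "\<dots> = (if n \<le> m then g (m - n) else \<zero>)"
  proof (cases "n \<le> m")
    case True then show ?thesis by (simp add: finsum_single gc)
  next
    case False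
    have "(\<Oplus>i\<in>{..m}. (if i = n then g (m - n) else \<zero>)) = \<zero>" by (rule finsum_zero_cong) (use False in auto)
    then show ?thesis using False by simp
  qed
  finally show ?thesis .
qed

lemma PS_X_pow: "PS_X R [^]\<^bsub>PS R\<^esub> n = delta R n"
proof (induction n)
  case 0 then show ?case by (simp add: PS_simps delta_def)
next
  case (Suc n)
  interpret P: ring "PS R" by (rule PS_ring)
  have X: "PS_X R = delta R 1" by (simp add: PS_X_def delta_def)
  have "PS_X R [^]\<^bsub>PS R\<^esub> Suc n = delta R n \<otimes>\<^bsub>PS R\<^esub> delta R 1" using Suc X by simp
  also have "\<dots> = delta R (Suc n)"
    by (rule ext) (simp add: delta_mult delta_carrier, auto simp add: delta_def)
  finally show ?case .
qed

lemma Zs_ideal: "ideal (Zs R n) (PS R)"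
proof -
  interpret P: ring "PS R" by (rule PS_ring)
  have asg: "additive_subgroup (Zs R n) (PS R)"
  proof (rule P.additive_subgroup_intro)
    show "Zs R n \<subseteq> carrier (PS R)" by (auto simp: Zs_def)
    show "\<zero>\<^bsub>PS R\<^esub> \<in> Zs R n" by (simp add: Zs_def PS_simps PS_carrier_iff)
    show "\<ominus>\<^bsub>PS R\<^esub> a \<in> Zs R n" if "a \<in> Zs R n" for a
      using that PS_neg[of a] P.a_inv_closed[of a] by (auto simp: Zs_def)
    show "a \<oplus>\<^bsub>PS R\<^esub> b \<in> Zs R n" if "a \<in> Zs R n" "b \<in> Zs R n" for a b
      using that by (auto simp: Zs_def PS_add_apply)
  qed
  show ?thesis
  proof (rule idealI)
    show "ring (PS R)" by (rule PS_ring)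
    show "subgroup (Zs R n) (add_monoid (PS R))" using asg unfolding additive_subgroup_def .
    show "x \<otimes>\<^bsub>PS R\<^esub> a \<in> Zs R n" if h: "a \<in> Zs R n" "x \<in> carrier (PS R)" for a x
    proof -
      have ac: "a \<in> carrier (PS R)" using that by (simp add: Zs_def)
      have a0: "\<And>j. j < n \<Longrightarrow> a j = \<zero>" using that by (simp add: Zs_def)
      have "(x \<otimes>\<^bsub>PS R\<^esub> a) m = \<zero>" if m: "m < n" for m
        unfolding PS_simps
        by (rule finsum_zero_cong) (use h m in \<open>auto simp: a0 PS_carrierD\<close>)
      then show ?thesis using ac that(2) by (simp add: Zs_def)
    qed
    show "a \<otimes>\<^bsub>PS R\<^esub> x \<in> Zs R n" if h: "a \<in> Zs R n" "x \<in> carrier (PS R)" for a x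
    proof -
      have ac: "a \<in> carrier (PS R)" using that by (simp add: Zs_def)
      have a0: "\<And>j. j < n \<Longrightarrow> a j = \<zero>" using that by (simp add: Zs_def)
      have "(a \<otimes>\<^bsub>PS R\<^esub> x) m = \<zero>" if m: "m < n" for m
        unfolding PS_simps
        by (rule finsum_zero_cong) (use h m in \<open>auto simp: a0 PS_carrierD\<close>)
      then show ?thesis using ac that(2) by (simp add: Zs_def)
    qed
  qed
qed

lemma PS_ideal_eq: "PS_ideal R n = Zs R n"
proof -
  interpret P: ring "PS R" by (rule PS_ring)
  have dZ: "delta R n \<in> Zs R n" using delta_carrier by (simp add: Zs_def delta_def)
  show ?thesis
  proof
    show "PS_ideal R n \<subseteq> Zs R n"
      unfolding PS_ideal_def PS_X_pow using P.genideal_minimal[OF Zs_ideal] dZ by blast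
    show "Zs R n \<subseteq> PS_ideal R n"
    proof
      fix f assume f: "f \<in> Zs R n"
      then have fc: "f \<in> carrier (PS R)" and f0: "\<And>i. i < n \<Longrightarrow> f i = \<zero>" by (auto simp: Zs_def)
      define g where "g = (\<lambda>i. f (i + n))"
      have gc: "g \<in> carrier (PS R)" using PS_carrierD[OF fc] by (auto simp: g_def intro!: PS_carrierI)
      have "f = delta R n \<otimes>\<^bsub>PS R\<^esub> g"
        by (rule ext) (simp only: delta_mult[OF gc], simp add: g_def f0)
      moreover have "delta R n \<in> PS_ideal R n"
        unfolding PS_ideal_def PS_X_pow using P.genideal_self'[OF delta_carrier] .
      ultimately show "f \<in> PS_ideal R n"
        using ideal.I_r_closed[OF P.genideal_ideal[of "{delta R n}"] _ gc] delta_carrier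
        unfolding PS_ideal_def PS_X_pow by auto
    qed
  qed
qed

end



context ideal begin

lemma I_abelian_subgroup: "abelian_subgroup I R"
  by (rule abelian_subgroupI3[OF is_additive_subgroup is_abelian_group])

lemma Q_ring: "ring (R Quot I)" by (rule quotient_is_ring)

lemma Q_carrier: "carrier (R Quot I) = (\<lambda>a. I +> a) ` carrier R"
  unfolding FactRing_def A_RCOSETS_def' by auto

lemma Q_cosetI: "a \<in> carrier R \<Longrightarrow> I +> a \<in> carrier (R Quot I)"
  by (simp add: Q_carrier)

lemma Q_mult: "a \<in> carrier R \<Longrightarrow> b \<in> carrier R \<Longrightarrow> (I +> a) \<otimes>\<^bsub>R Quot I\<^esub> (I +> b) = I +> (a \<otimes> b)"
  by (simp add: FactRing_def rcoset_mult_add)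

lemma Q_add: "a \<in> carrier R \<Longrightarrow> b \<in> carrier R \<Longrightarrow> (I +> a) \<oplus>\<^bsub>R Quot I\<^esub> (I +> b) = I +> (a \<oplus> b)"
  by (simp add: FactRing_def a_rcos_sum)

lemma Q_one: "\<one>\<^bsub>R Quot I\<^esub> = I +> \<one>" by (simp add: FactRing_def)
lemma Q_zero: "\<zero>\<^bsub>R Quot I\<^esub> = I" by (simp add: FactRing_def)

lemma Q_eq: "a \<in> carrier R \<Longrightarrow> b \<in> carrier R \<Longrightarrow> (I +> a = I +> b) \<longleftrightarrow> a \<ominus> b \<in> I"
proof -
  assume a: "a \<in> carrier R" and b: "b \<in> carrier R"
  interpret AS: abelian_subgroup I R by (rule I_abelian_subgroup)
  show ?thesis
  proof
    assume eq: "I +> a = I +> b"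
    have "a \<in> I +> b" using a_rcos_self[OF a] eq by simp
    then show "a \<ominus> b \<in> I" using a_rcos_module_minus[OF ring_axioms b a] by simp
  next
    assume "a \<ominus> b \<in> I"
    then have "a \<in> I +> b" using a_rcos_module_minus[OF ring_axioms b a] by simp
    then show "I +> a = I +> b" using a_repr_independence'[OF _ b] by simp
  qed
qed

lemma Q_zero_coset: "i \<in> I \<Longrightarrow> I +> i = I"
  using a_rcos_zero[OF is_ideal] by simp

lemma Q_neg: "a \<in> carrier R \<Longrightarrow> \<ominus>\<^bsub>R Quot I\<^esub> (I +> a) = I +> (\<ominus> a)"
proof -
  assume a: "a \<in> carrier R"
  interpret Q: ring "R Quot I" by (rule Q_ring)
  show ?thesis
  proof (rule Q.minus_equality)
    show "(I +> \<ominus> a) \<oplus>\<^bsub>R Quot I\<^esub> (I +> a) = \<zero>\<^bsub>R Quot I\<^esub>"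
      using a by (simp add: Q_add l_neg Q_zero Q_zero_coset)
    show "I +> a \<in> carrier (R Quot I)" using a by (rule Q_cosetI)
    show "I +> \<ominus> a \<in> carrier (R Quot I)" using a by (simp add: Q_cosetI)
  qed
qed

lemma preimage_left_ideal:
  assumes L: "left_ideal L (R Quot I)"
  shows "left_ideal {a \<in> carrier R. I +> a \<in> L} R"
proof -
  interpret Q: ring "R Quot I" by (rule Q_ring)
  note LD = Q.left_idealD[OF L]
  show ?thesis
  proof (rule left_idealI)
    show "{a \<in> carrier R. I +> a \<in> L} \<subseteq> carrier R" by blast
    show "\<zero> \<in> {a \<in> carrier R. I +> a \<in> L}" using LD(2) Q_zero Q_zero_coset[OF additive_subgroup.zero_closed[OF is_additive_subgroup]] by simp
    show "\<ominus> a \<in> {a \<in> carrier R. I +> a \<in> L}" if h: "a \<in> {a \<in> carrier R. I +> a \<in> L}" for a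
      using h LD(3) Q_neg by fastforce
    show "a \<oplus> b \<in> {a \<in> carrier R. I +> a \<in> L}" if h: "a \<in> {a \<in> carrier R. I +> a \<in> L}" "b \<in> {a \<in> carrier R. I +> a \<in> L}" for a b
      using h LD(4) Q_add by fastforce
    show "r \<otimes> a \<in> {a \<in> carrier R. I +> a \<in> L}" if h: "r \<in> carrier R" "a \<in> {a \<in> carrier R. I +> a \<in> L}" for r a
      using h LD(5)[OF Q_cosetI[OF h(1)]] Q_mult by fastforce
  qed
qed

lemma I_sub_preimage:
  assumes L: "left_ideal L (R Quot I)"
  shows "I \<subseteq> {a \<in> carrier R. I +> a \<in> L}"
proof -
  interpret Q: ring "R Quot I" by (rule Q_ring)
  show ?thesis using Q.left_idealD(2)[OF L] Q_zero Q_zero_coset a_subset by auto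
qed

lemma image_left_ideal:
  assumes K: "left_ideal K R"
  shows "left_ideal ((\<lambda>k. I +> k) ` K) (R Quot I)"
proof -
  interpret Q: ring "R Quot I" by (rule Q_ring)
  note KD = left_idealD[OF K]
  show ?thesis
  proof (rule Q.left_idealI)
    show "(\<lambda>k. I +> k) ` K \<subseteq> carrier (R Quot I)" using KD(1) Q_cosetI by blast
    have "\<zero>\<^bsub>R Quot I\<^esub> = I +> \<zero>" using Q_zero Q_zero_coset[OF additive_subgroup.zero_closed[OF is_additive_subgroup]] by simp
    then show "\<zero>\<^bsub>R Quot I\<^esub> \<in> (\<lambda>k. I +> k) ` K" using KD(2) by blast
    show "\<ominus>\<^bsub>R Quot I\<^esub> a \<in> (\<lambda>k. I +> k) ` K" if h: "a \<in> (\<lambda>k. I +> k) ` K" for a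
    proof -
      obtain k where k: "k \<in> K" "a = I +> k" using h by blast
      then have "\<ominus>\<^bsub>R Quot I\<^esub> a = I +> (\<ominus> k)" using Q_neg KD(1) by blast
      then show ?thesis using KD(3) k by blast
    qed
    show "a \<oplus>\<^bsub>R Quot I\<^esub> b \<in> (\<lambda>k. I +> k) ` K" if h: "a \<in> (\<lambda>k. I +> k) ` K" "b \<in> (\<lambda>k. I +> k) ` K" for a b
    proof -
      obtain k where k: "k \<in> K" "a = I +> k" using h by blast
      obtain l where l: "l \<in> K" "b = I +> l" using h by blast
      have "a \<oplus>\<^bsub>R Quot I\<^esub> b = I +> (k \<oplus> l)" using k l Q_add KD(1) by blast
      then show ?thesis using KD(4) k l by blast
    qed
    show "r \<otimes>\<^bsub>R Quot I\<^esub> a \<in> (\<lambda>k. I +> k) ` K" if h: "r \<in> carrier (R Quot I)" "a \<in> (\<lambda>k. I +> k) ` K" for r a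
    proof -
      obtain k where k: "k \<in> K" "a = I +> k" using h by blast
      obtain t where t: "t \<in> carrier R" "r = I +> t" using h(1) Q_carrier by blast
      have "r \<otimes>\<^bsub>R Quot I\<^esub> a = I +> (t \<otimes> k)" using k t Q_mult KD(1) by blast
      then show ?thesis using KD(5) k t by blast
    qed
  qed
qed

lemma image_proper:
  assumes K: "left_ideal K R" and IK: "I \<subseteq> K" and one: "\<one> \<notin> K"
  shows "\<one>\<^bsub>R Quot I\<^esub> \<notin> (\<lambda>k. I +> k) ` K"
proof
  assume "\<one>\<^bsub>R Quot I\<^esub> \<in> (\<lambda>k. I +> k) ` K"
  then obtain k where k: "k \<in> K" "I +> \<one> = I +> k" using Q_one by auto
  have kc: "k \<in> carrier R" using k left_idealD(1)[OF K] by blast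
  have "\<one> \<ominus> k \<in> K" using Q_eq[OF one_closed kc] k IK by blast
  then have "(\<one> \<ominus> k) \<oplus> k \<in> K" using left_idealD(4)[OF K] k by blast
  moreover have "(\<one> \<ominus> k) \<oplus> k = \<one>" using kc by (algebra; simp)
  ultimately show False using one by simp
qed

lemma Q_jac_up:
  assumes u: "u \<in> jacobson R"
  shows "I +> u \<in> jacobson (R Quot I)"
proof -
  interpret Q: ring "R Quot I" by (rule Q_ring)
  have uc: "u \<in> carrier R" using u jacobson_carrier by blast
  show ?thesis
  proof (rule Q.jacobsonI)
    show "I +> u \<in> carrier (R Quot I)" using uc by (rule Q_cosetI)
    fix M assume Mmax: "maximal_left_ideal M (R Quot I)"
    have LM: "left_ideal M (R Quot I)" and Mne: "M \<noteq> carrier (R Quot I)"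
      and Mmx: "\<And>L. left_ideal L (R Quot I) \<Longrightarrow> M \<subseteq> L \<Longrightarrow> L \<noteq> carrier (R Quot I) \<Longrightarrow> L = M"
      using Mmax unfolding maximal_left_ideal_def by blast+
    let ?M = "{a \<in> carrier R. I +> a \<in> M}"
    have "maximal_left_ideal ?M R" unfolding maximal_left_ideal_def
    proof (intro conjI allI impI)
      show LM': "left_ideal ?M R" by (rule preimage_left_ideal[OF LM])
      show "?M \<noteq> carrier R"
      proof
        assume "?M = carrier R"
        then have "\<one> \<in> ?M" using one_closed by simp
        then have "\<one>\<^bsub>R Quot I\<^esub> \<in> M" using Q_one by simp
        then show False using Q.left_ideal_one[OF LM] Mne by blast
      qed
      fix K assume K: "left_ideal K R \<and> ?M \<subseteq> K \<and> K \<noteq> carrier R"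
      have IK: "I \<subseteq> K" using I_sub_preimage[OF LM] K by blast
      have one: "\<one> \<notin> K" using left_ideal_one K by blast
      let ?K = "(\<lambda>k. I +> k) ` K"
      have LK: "left_ideal ?K (R Quot I)" using image_left_ideal K by blast
      have "M \<subseteq> ?K"
      proof
        fix Yc assume Yc: "Yc \<in> M"
        then have "Yc \<in> carrier (R Quot I)" using Q.left_idealD(1)[OF LM] by blast
        then obtain a where a: "a \<in> carrier R" "Yc = I +> a" unfolding Q_carrier by (rule imageE) blast
        then have "a \<in> ?M" using Yc by blast
        then show "Yc \<in> ?K" using a K by blast
      qed
      moreover have "?K \<noteq> carrier (R Quot I)" using image_proper[OF _ IK one] K Q.one_closed by blast
      ultimately have KM: "?K = M" using Mmx LK by blast
      show "K = ?M"
      proof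
        show "?M \<subseteq> K" using K by blast
        show "K \<subseteq> ?M" using KM left_idealD(1) K by blast
      qed
    qed
    then have "u \<in> ?M" using jacobsonD[OF u] by blast
    then show "I +> u \<in> M" by blast
  qed
qed

lemma Q_jac_down:
  assumes Kmax: "maximal_left_ideal K R" and IK: "I \<subseteq> K"
    and v: "v \<in> carrier R" and vJ: "I +> v \<in> jacobson (R Quot I)"
  shows "v \<in> K"
proof -
  interpret Q: ring "R Quot I" by (rule Q_ring)
  have LK: "left_ideal K R" and Kne: "K \<noteq> carrier R"
    and Kmx: "\<And>L. left_ideal L R \<Longrightarrow> K \<subseteq> L \<Longrightarrow> L \<noteq> carrier R \<Longrightarrow> L = K"
    using Kmax unfolding maximal_left_ideal_def by blast+
  have one: "\<one> \<notin> K" using left_ideal_one LK Kne by blast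
  let ?K = "(\<lambda>k. I +> k) ` K"
  have "maximal_left_ideal ?K (R Quot I)" unfolding maximal_left_ideal_def
  proof (intro conjI allI impI)
    show "left_ideal ?K (R Quot I)" by (rule image_left_ideal[OF LK])
    show "?K \<noteq> carrier (R Quot I)" using image_proper[OF LK IK one] Q.one_closed by blast
    fix L assume L: "left_ideal L (R Quot I) \<and> ?K \<subseteq> L \<and> L \<noteq> carrier (R Quot I)"
    let ?L = "{a \<in> carrier R. I +> a \<in> L}"
    have LL: "left_ideal ?L R" using preimage_left_ideal L by blast
    have "K \<subseteq> ?L" using L left_idealD(1)[OF LK] by blast
    moreover have "?L \<noteq> carrier R"
    proof
      assume "?L = carrier R"
      then have "\<one> \<in> ?L" using one_closed by simp
      then have "\<one>\<^bsub>R Quot I\<^esub> \<in> L" using Q_one by simp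
      then show False using Q.left_ideal_one L by blast
    qed
    ultimately have LK': "?L = K" using Kmx LL by blast
    show "L = ?K"
    proof
      show "?K \<subseteq> L" using L by blast
      show "L \<subseteq> ?K"
      proof
        fix Yc assume Yc: "Yc \<in> L"
        then have "Yc \<in> carrier (R Quot I)" using Q.left_idealD(1) L by blast
        then obtain a where a: "a \<in> carrier R" "Yc = I +> a" unfolding Q_carrier by (rule imageE) blast
        then have "a \<in> ?L" using Yc by blast
        then show "Yc \<in> ?K" using a LK' by blast
      qed
    qed
  qed
  then have "I +> v \<in> ?K" using Q.jacobsonD[OF vJ] by blast
  then obtain k where k: "k \<in> K" "I +> v = I +> k" by blast
  have kc: "k \<in> carrier R" using k left_idealD(1)[OF LK] by blast
  have "v \<ominus> k \<in> K" using Q_eq[OF v kc] k IK by blast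
  then have "(v \<ominus> k) \<oplus> k \<in> K" using left_idealD(4)[OF LK] k by blast
  moreover have "(v \<ominus> k) \<oplus> k = v" using kc v by (algebra; simp)
  ultimately show ?thesis by simp
qed

end



context ring begin

lemma PS_trunc_eq: "PS_trunc R n = PS R Quot Zs R n"
  by (simp add: PS_trunc_def PS_ideal_eq)

lemma ps_star_carrier: "star_ring R s \<Longrightarrow> h \<in> carrier (PS R) \<Longrightarrow> PS_star s h \<in> carrier (PS R)"
  using star_basic(1) by (auto simp: PS_star_def intro!: PS_carrierI dest: PS_carrierD)

lemma ps_star_add: "star_ring R s \<Longrightarrow> h \<in> carrier (PS R) \<Longrightarrow> g \<in> carrier (PS R) \<Longrightarrow>
    PS_star s (h \<oplus>\<^bsub>PS R\<^esub> g) = PS_star s h \<oplus>\<^bsub>PS R\<^esub> PS_star s g"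
  unfolding PS_star_def PS_simps(5) by (rule ext) (simp add: star_basic(2) PS_carrierD)

lemma ps_star_inv: "star_ring R s \<Longrightarrow> h \<in> carrier (PS R) \<Longrightarrow> PS_star s (PS_star s h) = h"
  using star_basic(4) by (auto simp: PS_star_def dest: PS_carrierD)

lemma ps_star_Zs: "star_ring R s \<Longrightarrow> h \<in> Zs R n \<Longrightarrow> PS_star s h \<in> Zs R n"
  using ps_star_carrier star_zero by (auto simp: Zs_def PS_star_def)

lemma star_coset:
  assumes st: "star_ring R s" and g: "g \<in> carrier (PS R)"
  shows "PS_star s ` (Zs R n +>\<^bsub>PS R\<^esub> g) = Zs R n +>\<^bsub>PS R\<^esub> PS_star s g"
proof -
  have Zc: "\<And>h. h \<in> Zs R n \<Longrightarrow> h \<in> carrier (PS R)" by (simp add: Zs_def)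
  show ?thesis
  proof
    show "PS_star s ` (Zs R n +>\<^bsub>PS R\<^esub> g) \<subseteq> Zs R n +>\<^bsub>PS R\<^esub> PS_star s g"
    proof
      fix y assume "y \<in> PS_star s ` (Zs R n +>\<^bsub>PS R\<^esub> g)"
      then obtain h where h: "h \<in> Zs R n" "y = PS_star s (h \<oplus>\<^bsub>PS R\<^esub> g)"
        unfolding a_r_coset_def' by blast
      then have "y = PS_star s h \<oplus>\<^bsub>PS R\<^esub> PS_star s g" using ps_star_add[OF st Zc[OF h(1)] g] by simp
      then show "y \<in> Zs R n +>\<^bsub>PS R\<^esub> PS_star s g"
        unfolding a_r_coset_def' using ps_star_Zs[OF st h(1)] by blast
    qed
    show "Zs R n +>\<^bsub>PS R\<^esub> PS_star s g \<subseteq> PS_star s ` (Zs R n +>\<^bsub>PS R\<^esub> g)"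
    proof
      fix y assume "y \<in> Zs R n +>\<^bsub>PS R\<^esub> PS_star s g"
      then obtain h where h: "h \<in> Zs R n" "y = h \<oplus>\<^bsub>PS R\<^esub> PS_star s g"
        unfolding a_r_coset_def' by blast
      have h': "PS_star s h \<in> Zs R n" using ps_star_Zs[OF st h(1)] .
      have "PS_star s (PS_star s h \<oplus>\<^bsub>PS R\<^esub> g) = y"
        using ps_star_add[OF st Zc[OF h'] g] ps_star_inv[OF st Zc[OF h(1)]] h(2) by simp
      moreover have "PS_star s h \<oplus>\<^bsub>PS R\<^esub> g \<in> Zs R n +>\<^bsub>PS R\<^esub> g"
        unfolding a_r_coset_def' using h' by blast
      ultimately show "y \<in> PS_star s ` (Zs R n +>\<^bsub>PS R\<^esub> g)" by blast
    qed
  qed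
qed

lemma clean_PS_to_trunc:
  assumes st: "star_ring R s" and cl: "strongly_J_star_clean (PS R) (PS_star s)"
  shows "strongly_J_star_clean (PS_trunc R n) (PS_trunc_star s)"
proof -
  interpret P: ring "PS R" by (rule PS_ring)
  interpret QI: ideal "Zs R n" "PS R" by (rule Zs_ideal)
  show ?thesis unfolding strongly_J_star_clean_def PS_trunc_eq
  proof
    fix Yc assume "Yc \<in> carrier (PS R Quot Zs R n)"
    then obtain f where f: "f \<in> carrier (PS R)" "Yc = Zs R n +>\<^bsub>PS R\<^esub> f"
      unfolding QI.Q_carrier by (rule imageE) blast
    obtain E U where E: "projection (PS R) (PS_star s) E" and U: "U \<in> jacobson (PS R)"
      and fEU: "f = E \<oplus>\<^bsub>PS R\<^esub> U" and fE: "f \<otimes>\<^bsub>PS R\<^esub> E = E \<otimes>\<^bsub>PS R\<^esub> f"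
      using cl f(1) unfolding strongly_J_star_clean_def by blast
    have Ec: "E \<in> carrier (PS R)" and EE: "E \<otimes>\<^bsub>PS R\<^esub> E = E" and sE: "PS_star s E = E"
      using E unfolding projection_def by auto
    have Uc: "U \<in> carrier (PS R)" using U P.jacobson_carrier by blast
    let ?P = "Zs R n +>\<^bsub>PS R\<^esub> E"
    let ?V = "Zs R n +>\<^bsub>PS R\<^esub> U"
    have "projection (PS R Quot Zs R n) (PS_trunc_star s) ?P"
      unfolding projection_def PS_trunc_star_def
      using QI.Q_cosetI[OF Ec] QI.Q_mult[OF Ec Ec] EE star_coset[OF st Ec] sE by simp
    moreover have "?V \<in> jacobson (PS R Quot Zs R n)" using QI.Q_jac_up[OF U] .
    moreover have "Yc = ?P \<oplus>\<^bsub>PS R Quot Zs R n\<^esub> ?V" using QI.Q_add[OF Ec Uc] f fEU by simp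
    moreover have "Yc \<otimes>\<^bsub>PS R Quot Zs R n\<^esub> ?P = ?P \<otimes>\<^bsub>PS R Quot Zs R n\<^esub> Yc"
      using QI.Q_mult[OF f(1) Ec] QI.Q_mult[OF Ec f(1)] f(2) fE by simp
    ultimately show "\<exists>e u. projection (PS R Quot Zs R n) (PS_trunc_star s) e \<and>
        u \<in> jacobson (PS R Quot Zs R n) \<and> Yc = e \<oplus>\<^bsub>PS R Quot Zs R n\<^esub> u \<and>
        Yc \<otimes>\<^bsub>PS R Quot Zs R n\<^esub> e = e \<otimes>\<^bsub>PS R Quot Zs R n\<^esub> Yc" by blast
  qed
qed

lemma coset_coeff0:
  assumes n: "1 \<le> n" and g: "g \<in> carrier (PS R)" and h: "h \<in> carrier (PS R)"
    and eq: "Zs R n +>\<^bsub>PS R\<^esub> g = Zs R n +>\<^bsub>PS R\<^esub> h"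
  shows "g 0 = h 0"
proof -
  interpret P: ring "PS R" by (rule PS_ring)
  interpret QI: ideal "Zs R n" "PS R" by (rule Zs_ideal)
  have "g \<ominus>\<^bsub>PS R\<^esub> h \<in> Zs R n" using QI.Q_eq[OF g h] eq by simp
  then have "\<forall>i<n. (g \<ominus>\<^bsub>PS R\<^esub> h) i = \<zero>" unfolding Zs_def by blast
  moreover have "0 < n" using n by simp
  ultimately have "(g \<ominus>\<^bsub>PS R\<^esub> h) 0 = \<zero>" by blast
  then have "g 0 \<ominus> h 0 = \<zero>" using PS_minus[OF g h] by simp
  then show ?thesis using PS_carrierD[OF g] PS_carrierD[OF h] by (metis eq_of_minus_zero)
qed

lemma clean_trunc_to_R:
  assumes st: "star_ring R s" and n: "1 \<le> n"
    and cl: "strongly_J_star_clean (PS_trunc R n) (PS_trunc_star s)"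
  shows "strongly_J_star_clean R s"
  unfolding strongly_J_star_clean_def
proof
  interpret P: ring "PS R" by (rule PS_ring)
  interpret QI: ideal "Zs R n" "PS R" by (rule Zs_ideal)
  fix a assume a: "a \<in> carrier R"
  define F where "F = PSc R a"
  have Fc: "F \<in> carrier (PS R)" using a PSc_carrier by (simp add: F_def)
  obtain Pc Vc where Pp: "projection (PS R Quot Zs R n) (PS_trunc_star s) Pc"
    and V: "Vc \<in> jacobson (PS R Quot Zs R n)"
    and XPV: "Zs R n +>\<^bsub>PS R\<^esub> F = Pc \<oplus>\<^bsub>PS R Quot Zs R n\<^esub> Vc"
    and XP: "(Zs R n +>\<^bsub>PS R\<^esub> F) \<otimes>\<^bsub>PS R Quot Zs R n\<^esub> Pc = Pc \<otimes>\<^bsub>PS R Quot Zs R n\<^esub> (Zs R n +>\<^bsub>PS R\<^esub> F)"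
    using cl QI.Q_cosetI[OF Fc] unfolding strongly_J_star_clean_def PS_trunc_eq by blast
  have Pc: "Pc \<in> carrier (PS R Quot Zs R n)" and PP: "Pc \<otimes>\<^bsub>PS R Quot Zs R n\<^esub> Pc = Pc"
    and sP: "PS_trunc_star s Pc = Pc" using Pp unfolding projection_def by auto
  obtain g where g: "g \<in> carrier (PS R)" "Pc = Zs R n +>\<^bsub>PS R\<^esub> g"
    using Pc unfolding QI.Q_carrier by (rule imageE) blast
  interpret Q: ring "PS R Quot Zs R n" by (rule QI.Q_ring)
  have Vcc: "Vc \<in> carrier (PS R Quot Zs R n)" using V Q.jacobson_carrier by blast
  obtain v where v: "v \<in> carrier (PS R)" "Vc = Zs R n +>\<^bsub>PS R\<^esub> v"
    using Vcc unfolding QI.Q_carrier by (rule imageE) blast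
  have gc: "\<And>i. g i \<in> carrier R" using g PS_carrierD by blast
  have vc: "\<And>i. v i \<in> carrier R" using v PS_carrierD by blast
  have "projection R s (g 0)"
  proof -
    have "Zs R n +>\<^bsub>PS R\<^esub> (g \<otimes>\<^bsub>PS R\<^esub> g) = Zs R n +>\<^bsub>PS R\<^esub> g" using PP g QI.Q_mult[OF g(1) g(1)] by simp
    then have "(g \<otimes>\<^bsub>PS R\<^esub> g) 0 = g 0" by (rule coset_coeff0[OF n P.m_closed[OF g(1) g(1)] g(1)])
    then have gg: "g 0 \<otimes> g 0 = g 0" using PS_mult_0[OF g(1) g(1)] by simp
    have "Zs R n +>\<^bsub>PS R\<^esub> PS_star s g = Zs R n +>\<^bsub>PS R\<^esub> g"
      using sP g star_coset[OF st g(1)] unfolding PS_trunc_star_def by simp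
    then have "PS_star s g 0 = g 0" by (rule coset_coeff0[OF n ps_star_carrier[OF st g(1)] g(1)])
    then have "s (g 0) = g 0" by (simp add: PS_star_def)
    then show ?thesis using gg gc unfolding projection_def by simp
  qed
  moreover have "v 0 \<in> jacobson R"
  proof (rule jacobsonI)
    show "v 0 \<in> carrier R" by (rule vc)
    fix M assume M: "maximal_left_ideal M R"
    have LM: "left_ideal M R" using M unfolding maximal_left_ideal_def by blast
    have Mx: "maximal_left_ideal {h \<in> carrier (PS R). h 0 \<in> M} (PS R)" using lift_maximal[OF M] .
    have n0: "0 < n" using n by simp
    have "Zs R n \<subseteq> {h \<in> carrier (PS R). h 0 \<in> M}"
    proof
      fix h assume "h \<in> Zs R n"
      then have "h \<in> carrier (PS R)" "\<forall>i<n. h i = \<zero>" unfolding Zs_def by blast+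
      then show "h \<in> {h \<in> carrier (PS R). h 0 \<in> M}" using n0 left_idealD(2)[OF LM] by auto
    qed
    then have "v \<in> {h \<in> carrier (PS R). h 0 \<in> M}" using QI.Q_jac_down[OF Mx _ v(1)] V v(2) by blast
    then show "v 0 \<in> M" by blast
  qed
  moreover have "a = g 0 \<oplus> v 0"
  proof -
    have "Zs R n +>\<^bsub>PS R\<^esub> F = Zs R n +>\<^bsub>PS R\<^esub> (g \<oplus>\<^bsub>PS R\<^esub> v)" using XPV g v QI.Q_add[OF g(1) v(1)] by simp
    then have "F 0 = (g \<oplus>\<^bsub>PS R\<^esub> v) 0" by (rule coset_coeff0[OF n Fc P.a_closed[OF g(1) v(1)]])
    then show ?thesis by (simp add: F_def PSc_def PS_add_apply)
  qed
  moreover have "a \<otimes> g 0 = g 0 \<otimes> a"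
  proof -
    have "Zs R n +>\<^bsub>PS R\<^esub> (F \<otimes>\<^bsub>PS R\<^esub> g) = Zs R n +>\<^bsub>PS R\<^esub> (g \<otimes>\<^bsub>PS R\<^esub> F)"
      using XP g QI.Q_mult[OF Fc g(1)] QI.Q_mult[OF g(1) Fc] by simp
    then have "(F \<otimes>\<^bsub>PS R\<^esub> g) 0 = (g \<otimes>\<^bsub>PS R\<^esub> F) 0" by (rule coset_coeff0[OF n P.m_closed[OF Fc g(1)] P.m_closed[OF g(1) Fc]])
    then show ?thesis using PS_mult_0[OF Fc g(1)] PS_mult_0[OF g(1) Fc] by (simp add: F_def PSc_def)
  qed
  ultimately show "\<exists>e u. projection R s e \<and> u \<in> jacobson R \<and> a = e \<oplus> u \<and> a \<otimes> e = e \<otimes> a" by blast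
qed

end

theorem proposition4p3:
  fixes R :: "('a, 'm) ring_scheme" and s :: "'a \<Rightarrow> 'a"
  assumes "star_ring R s"
  shows "(strongly_J_star_clean R s \<longleftrightarrow> strongly_J_star_clean (PS R) (PS_star s))
       \<and> (strongly_J_star_clean (PS R) (PS_star s) \<longleftrightarrow>
            (\<forall>n\<ge>2. strongly_J_star_clean (PS_trunc R n) (PS_trunc_star s)))
       \<and> ((\<forall>n\<ge>2. strongly_J_star_clean (PS_trunc R n) (PS_trunc_star s)) \<longleftrightarrow>
            strongly_J_star_clean (PS_trunc R 2) (PS_trunc_star s))"
proof -
  interpret ring R using assms unfolding star_ring_def by blast
  have A: "strongly_J_star_clean R s \<Longrightarrow> strongly_J_star_clean (PS R) (PS_star s)"
    using clean_R_to_PS[OF assms] .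
  have B: "strongly_J_star_clean (PS R) (PS_star s) \<Longrightarrow> strongly_J_star_clean R s"
    using clean_PS_to_R[OF assms] .
  have C: "\<And>n. strongly_J_star_clean (PS R) (PS_star s) \<Longrightarrow> strongly_J_star_clean (PS_trunc R n) (PS_trunc_star s)"
    using clean_PS_to_trunc[OF assms] .
  have D: "strongly_J_star_clean (PS_trunc R 2) (PS_trunc_star s) \<Longrightarrow> strongly_J_star_clean R s"
    using clean_trunc_to_R[OF assms, of 2] by simp
  show ?thesis using A B C D by blast
qed



end
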